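(* Let $(X,\mathcal R)$ and $(Y,\mathcal S)$ be exactly triply regular symmetric $d$-class association schemes having the same Delta–Wye parameters with respect to orderings $A_0,\dots,A_d$, $A'_0,\dots,A'_d$ of their adjacency matrices and $E_0,\dots,E_d$, $E'_0,\dots,E'_d$ of their primitive idempotents. Then, under these orderings, the two schemes have the same intersection numbers $p_{ij}^k$, the same eigenvalues $P_{ji}$, the same dual eigenvalues $Q_{ji}$ and the same Krein parameters $q_{ij}^k$. Moreover the linear map $\kappa:\mathbb A\to\mathbb A'$ defined by $\kappa(A_i)=A'_i$ ($0\le i\le d$) satisfies $\kappa(MN)=\kappa(M)\kappa(N)$ and $\kappa(M\circ N)=\kappa(M)\circ\kappa(N)$ for all $M,N\in\mathbb A$, and $\kappa(E_j)=E'_j$ for all $j$.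
   Context: A symmetric $d$-class association scheme $(X,\mathcal R)$ consists of a finite nonempty set $X$ and a partition $\mathcal R=\{R_0,\dots,R_d\}$ of $X\times X$ into nonempty symmetric relations, with $R_0=\{(x,x):x\in X\}$, such that for all $i,j,k$ the number $p_{ij}^k=|\{z\in X:(x,z)\in R_i,(z,y)\in R_j\}|$ (the intersection numbers) does not depend on the choice of $(x,y)\in R_k$. The adjacency matrix $A_i\in\mathrm{Mat}_X(\mathbb C)$ is the $0/1$ matrix of $R_i$. The Bose–Mesner algebra $\mathbb A=\mathrm{span}\{A_0,\dots,A_d\}$ is commutative and closed under ordinary matrix product and under the entrywise (Schur) product $\circ$; it has a second basis of primitive idempotents $E_0,\dots,E_d$ (symmetric, $E_iE_j=\delta_{ij}E_i$, $\sum_j E_j=I$). Eigenvalues $P_{ji}$ and dual eigenvalues $Q_{ji}$ are defined by $A_i=\sum_j P_{ji}E_j$ and $E_i=|X|^{-1}\sum_j Q_{ji}A_j$, and Krein parameters $q_{ij}^k$ by $E_i\circ E_j=|X|^{-1}\sum_k q_{ij}^kE_k$. $\mathbb A'$ denotes the Bose–Mesner algebra of $(Y,\mathcal S)$. For $L,M,N\in\mathrm{Mat}_X(\mathbb C)$ define tensors in $(\mathbb C^X)^{\otimes 3}$: $\Delta(L,M,N)=\sum_{x,y,z\in X}L_{xz}M_{xy}N_{yz}\,\hat x\otimes\hat y\otimes\hat z$ and $\Upsilon(L,M,N)=\sum_{x,y,z,u\in X}L_{xu}M_{yu}N_{zu}\,\hat x\otimes\hat y\otimes\hat z$. Let $\Delta(\mathbb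 A)$ and $\Upsilon(\mathbb A)$ be the spans of all $\Delta(L,M,N)$, resp. $\Upsilon(L,M,N)$, with $L,M,N\in\mathbb A$. The scheme is triply regular if $\Upsilon(\mathbb A)\subseteq\Delta(\mathbb A)$, dually triply regular if $\Delta(\mathbb A)\subseteq\Upsilon(\mathbb A)$, and exactly triply regular if both hold. It is known that the tensors $\Upsilon(E_r,E_s,E_t)$ with $q_{rs}^t>0$ form a basis of $\Upsilon(\mathbb A)$. Delta–Wye parameters: if the scheme is exactly triply regular, then for each $i,j,k\in\{0,\dots,d\}$ there are unique scalars $\sigma^{i,j,k}_{r,s,t}$ ($r,s,t$ with $q_{rs}^t>0$; set $\sigma^{i,j,k}_{r,s,t}=0$ when $q_{rs}^t=0$) such that $\Delta(A_i,A_j,A_k)=\sum_{q_{rs}^t>0}\sigma^{i,j,k}_{r,s,t}\,\Upsilon(E_r,E_s,E_t)$. Two exactly triply regular $d$-class schemes $(X,\mathcal R)$, $(Y,\mathcal S)$ have the same Delta–Wye parameters if there are orderings $A_0,\dots,A_d$ and $A'_0,\dots,A'_d$ of their adjacency matrices and $E_0,\dots,E_d$ and $E'_0,\dots,E'_d$ of their primitive idempotents such that $\sigma^{i,j,k}_{r,s,t}$ computed in $(X,\mathcal R)$ equals the corresponding $\sigma^{i,j,k}_{r,s,t}$ computed in $(Y,\mathcal S)$ for all $i,j,k,r,s,t\in\{0,\dots,d\}$. *)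

theory Defs
  imports Complex_Main "HOL-Library.Function_Algebras"
begin

type_synonym 'x mat = "'x \<Rightarrow> 'x \<Rightarrow> complex"
type_synonym 'x tensor = "'x \<Rightarrow> 'x \<Rightarrow> 'x \<Rightarrow> complex"

definition adj :: "('x \<times> 'x) set \<Rightarrow> 'x mat" where
  "adj Rel = (\<lambda>x y. if (x, y) \<in> Rel then 1 else 0)"

definition idm :: "'x mat" where
  "idm = (\<lambda>x y. if x = y then 1 else 0)"

definition mmul :: "'x::finite mat \<Rightarrow> 'x mat \<Rightarrow> 'x mat" where
  "mmul M N = (\<lambda>x y. \<Sum>z\<in>UNIV. M x z * N z y)"

definition schur :: "'x mat \<Rightarrow> 'x mat \<Rightarrow> 'x mat" where
  "schur M N = (\<lambda>x y. M x y * N x y)"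

definition smul :: "complex \<Rightarrow> 'x mat \<Rightarrow> 'x mat" where
  "smul c M = (\<lambda>x y. c * M x y)"

definition tsmul :: "complex \<Rightarrow> 'x tensor \<Rightarrow> 'x tensor" where
  "tsmul c T = (\<lambda>x y z. c * T x y z)"

definition rel_of :: "'x mat \<Rightarrow> ('x \<times> 'x) set" where
  "rel_of M = {(x, y). M x y \<noteq> 0}"

definition intersection_number :: "(nat \<Rightarrow> ('x \<times> 'x) set) \<Rightarrow> nat \<Rightarrow> nat \<Rightarrow> nat \<Rightarrow> nat" where
  "intersection_number R i j k =
     (let p = (SOME p. p \<in> R k) in card {z. (fst p, z) \<in> R i \<and> (z, snd p) \<in> R j})"

definition sym_assoc_scheme :: "nat \<Rightarrow> (nat \<Rightarrow> ('x::finite \<times> 'x) set) \<Rightarrow> bool" where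
  "sym_assoc_scheme d R \<longleftrightarrow>
     (\<forall>i\<le>d. R i \<noteq> {}) \<and>
     (\<forall>i\<le>d. \<forall>j\<le>d. i \<noteq> j \<longrightarrow> R i \<inter> R j = {}) \<and>
     (\<Union>i\<le>d. R i) = UNIV \<and>
     R 0 = Id \<and>
     (\<forall>i\<le>d. sym (R i)) \<and>
     (\<forall>i\<le>d. \<forall>j\<le>d. \<forall>k\<le>d. \<forall>x y x' y'. (x, y) \<in> R k \<longrightarrow> (x', y') \<in> R k \<longrightarrow>
        card {z. (x, z) \<in> R i \<and> (z, y) \<in> R j} = card {z. (x', z) \<in> R i \<and> (z, y') \<in> R j})"

definition bose_mesner :: "nat \<Rightarrow> (nat \<Rightarrow> ('x::finite \<times> 'x) set) \<Rightarrow> 'x mat set" where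
  "bose_mesner d R = {M. \<exists>c. M = (\<Sum>i\<le>d. smul (c i) (adj (R i)))}"

text \<open>Primitive (= minimal nonzero) idempotents of the commutative algebra.\<close>
definition prim_idem :: "nat \<Rightarrow> (nat \<Rightarrow> ('x::finite \<times> 'x) set) \<Rightarrow> 'x mat \<Rightarrow> bool" where
  "prim_idem d R E \<longleftrightarrow> E \<in> bose_mesner d R \<and> mmul E E = E \<and> E \<noteq> 0 \<and>
     (\<forall>F\<in>bose_mesner d R. mmul F F = F \<longrightarrow> mmul E F = E \<or> mmul E F = 0)"

definition adj_ordering :: "nat \<Rightarrow> (nat \<Rightarrow> ('x::finite \<times> 'x) set) \<Rightarrow> (nat \<Rightarrow> 'x mat) \<Rightarrow> bool" where
  "adj_ordering d R A \<longleftrightarrow> bij_betw A {..d} ((\<lambda>i. adj (R i)) ` {..d})"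

definition idem_ordering :: "nat \<Rightarrow> (nat \<Rightarrow> ('x::finite \<times> 'x) set) \<Rightarrow> (nat \<Rightarrow> 'x mat) \<Rightarrow> bool" where
  "idem_ordering d R E \<longleftrightarrow> bij_betw E {..d} {F. prim_idem d R F}"

definition inum :: "(nat \<Rightarrow> 'x mat) \<Rightarrow> nat \<Rightarrow> nat \<Rightarrow> nat \<Rightarrow> nat" where
  "inum A i j k = intersection_number (\<lambda>l. rel_of (A l)) i j k"

definition eigP :: "nat \<Rightarrow> (nat \<Rightarrow> 'x mat) \<Rightarrow> (nat \<Rightarrow> 'x mat) \<Rightarrow> nat \<Rightarrow> nat \<Rightarrow> complex" where
  "eigP d A E j i = (THE c. \<exists>p. A i = (\<Sum>l\<le>d. smul (p l) (E l)) \<and> p j = c)"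

definition dualQ :: "nat \<Rightarrow> (nat \<Rightarrow> 'x::finite mat) \<Rightarrow> (nat \<Rightarrow> 'x mat) \<Rightarrow> nat \<Rightarrow> nat \<Rightarrow> complex" where
  "dualQ d A E j i = (THE c. \<exists>q. E i = smul (1 / of_nat (card (UNIV :: 'x set))) (\<Sum>l\<le>d. smul (q l) (A l)) \<and> q j = c)"

definition krein :: "nat \<Rightarrow> (nat \<Rightarrow> 'x::finite mat) \<Rightarrow> nat \<Rightarrow> nat \<Rightarrow> nat \<Rightarrow> complex" where
  "krein d E i j k = (THE c. \<exists>q. schur (E i) (E j) = smul (1 / of_nat (card (UNIV :: 'x set))) (\<Sum>l\<le>d. smul (q l) (E l)) \<and> q k = c)"

definition Delta :: "'x mat \<Rightarrow> 'x mat \<Rightarrow> 'x mat \<Rightarrow> 'x tensor" where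
  "Delta L M N = (\<lambda>x y z. L x z * M x y * N y z)"

definition Upsilon :: "'x::finite mat \<Rightarrow> 'x mat \<Rightarrow> 'x mat \<Rightarrow> 'x tensor" where
  "Upsilon L M N = (\<lambda>x y z. \<Sum>u\<in>UNIV. L x u * M y u * N z u)"

definition tspan :: "'x tensor set \<Rightarrow> 'x tensor set" where
  "tspan S = {T. \<exists>F c. finite F \<and> F \<subseteq> S \<and> T = (\<Sum>f\<in>F. tsmul (c f) f)}"

definition Delta_space :: "nat \<Rightarrow> (nat \<Rightarrow> ('x::finite \<times> 'x) set) \<Rightarrow> 'x tensor set" where
  "Delta_space d R = tspan {Delta L M N | L M N.
     L \<in> bose_mesner d R \<and> M \<in> bose_mesner d R \<and> N \<in> bose_mesner d R}"

definition Upsilon_space :: "nat \<Rightarrow> (nat \<Rightarrow> ('x::finite \<times> 'x) set) \<Rightarrow> 'x tensor set" where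
  "Upsilon_space d R = tspan {Upsilon L M N | L M N.
     L \<in> bose_mesner d R \<and> M \<in> bose_mesner d R \<and> N \<in> bose_mesner d R}"

definition triply_regular where
  "triply_regular d R \<longleftrightarrow> Upsilon_space d R \<subseteq> Delta_space d R"

definition dually_triply_regular where
  "dually_triply_regular d R \<longleftrightarrow> Delta_space d R \<subseteq> Upsilon_space d R"

definition exactly_triply_regular where
  "exactly_triply_regular d R \<longleftrightarrow> triply_regular d R \<and> dually_triply_regular d R"

definition cpos :: "complex \<Rightarrow> bool" where
  "cpos c \<longleftrightarrow> Im c = 0 \<and> 0 < Re c"

definition krein_support :: "nat \<Rightarrow> (nat \<Rightarrow> 'x::finite mat) \<Rightarrow> (nat \<times> nat \<times> nat) set" where
  "krein_support d E = {(r, s, t). r \<le> d \<and> s \<le> d \<and> t \<le> d \<and> cpos (krein d E r s t)}"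

definition dw_param :: "nat \<Rightarrow> (nat \<Rightarrow> 'x::finite mat) \<Rightarrow> (nat \<Rightarrow> 'x mat) \<Rightarrow>
    nat \<Rightarrow> nat \<Rightarrow> nat \<Rightarrow> nat \<Rightarrow> nat \<Rightarrow> nat \<Rightarrow> complex" where
  "dw_param d A E i j k r s t =
     (if (r, s, t) \<in> krein_support d E then
        (THE c. \<exists>\<sigma>. Delta (A i) (A j) (A k) =
            (\<Sum>(r', s', t')\<in>krein_support d E. tsmul (\<sigma> (r', s', t')) (Upsilon (E r') (E s') (E t')))
          \<and> \<sigma> (r, s, t) = c)
      else 0)"

definition coord :: "nat \<Rightarrow> (nat \<Rightarrow> 'x mat) \<Rightarrow> 'x mat \<Rightarrow> nat \<Rightarrow> complex" where
  "coord d B M k = (THE c. \<exists>a. M = (\<Sum>l\<le>d. smul (a l) (B l)) \<and> a k = c)"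

definition kappa :: "nat \<Rightarrow> (nat \<Rightarrow> 'x mat) \<Rightarrow> (nat \<Rightarrow> 'y mat) \<Rightarrow> 'x mat \<Rightarrow> 'y mat" where
  "kappa d A A' M = (\<Sum>i\<le>d. smul (coord d A M i) (A' i))"

end

theory Submission
  imports Defs
begin

lemma sum_apply1[simp]: "(\<Sum>i\<in>S. f i) x = (\<Sum>i\<in>S. f i x)"
  by (induction S rule: infinite_finite_induct) auto

lemma smul_apply[simp]: "smul c M x y = c * M x y" by (simp add: smul_def)
lemma tsmul_apply[simp]: "tsmul c T x y z = c * T x y z" by (simp add: tsmul_def)
lemma schur_apply[simp]: "schur M N x y = M x y * N x y" by (simp add: schur_def)
lemma mmul_apply: "mmul M N x y = (\<Sum>z\<in>UNIV. M x z * N z y)" by (simp add: mmul_def)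
lemma Delta_apply[simp]: "Delta L M N x y z = L x z * M x y * N y z" by (simp add: Delta_def)
lemma Upsilon_apply: "Upsilon L M N x y z = (\<Sum>u\<in>UNIV. L x u * M y u * N z u)" by (simp add: Upsilon_def)

interpretation mvs: vector_space "smul :: complex \<Rightarrow> 'x mat \<Rightarrow> 'x mat"
  by unfold_locales (auto simp: smul_def fun_eq_iff algebra_simps)

definition BMs :: "nat \<Rightarrow> (nat \<Rightarrow> 'x mat) \<Rightarrow> 'x mat set" where
  "BMs d A = {M. \<exists>c. M = (\<Sum>i\<le>d. smul (c i) (A i))}"

lemma lincomb_diff:
  "(\<Sum>l\<le>d. smul (a l) (B l)) - (\<Sum>l\<le>d. smul (b l) (B l)) = (\<Sum>l\<le>d. smul (a l - b l) (B l))"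
  by (auto simp: fun_eq_iff algebra_simps sum_subtractf)

lemma lincomb_comp:
  "(\<Sum>r\<le>d. smul (a r) (\<Sum>i\<le>e. smul (b r i) (B i))) = (\<Sum>i\<le>e. smul (\<Sum>r\<le>d. a r * b r i) (B i))"
  by (auto simp: fun_eq_iff sum_distrib_left sum_distrib_right mult.assoc intro: sum.swap)

definition indep :: "nat \<Rightarrow> (nat \<Rightarrow> 'x mat) \<Rightarrow> bool" where
  "indep d B \<longleftrightarrow> (\<forall>c. (\<Sum>l\<le>d. smul (c l) (B l)) = 0 \<longrightarrow> (\<forall>l\<le>d. c l = 0))"

lemma indep_eq:
  assumes "indep d B" "(\<Sum>l\<le>d. smul (a l) (B l)) = (\<Sum>l\<le>d. smul (b l) (B l))" "k \<le> d"
  shows "a k = b k"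
proof -
  have "(\<Sum>l\<le>d. smul (a l - b l) (B l)) = 0" using assms(2) lincomb_diff[of a B d b] by simp
  then show ?thesis using assms(1,3) unfolding indep_def by force
qed

lemma the_coord:
  assumes "indep d B" "M = (\<Sum>l\<le>d. smul (a l) (B l))" "k \<le> d"
  shows "(THE c. \<exists>a. M = (\<Sum>l\<le>d. smul (a l) (B l)) \<and> a k = c) = a k"
  apply (rule the_equality)
  using assms indep_eq[OF assms(1) _ assms(3)] by auto

lemma coord_eq:
  assumes "indep d B" "M = (\<Sum>l\<le>d. smul (a l) (B l))" "k \<le> d"
  shows "coord d B M k = a k"
  unfolding coord_def using the_coord[OF assms] .

lemma smul_sum_lincomb: "smul s (\<Sum>l\<le>d. smul (q l) (B l)) = (\<Sum>l\<le>d. smul (s * q l) (B l))"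
  by (auto simp: fun_eq_iff sum_distrib_left mult.assoc)

lemma the_coord_scaled:
  assumes "indep d B" "M = (\<Sum>l\<le>d. smul (a l) (B l))" "k \<le> d" "s \<noteq> 0"
  shows "(THE c. \<exists>q. M = smul s (\<Sum>l\<le>d. smul (q l) (B l)) \<and> q k = c) = a k / s"
proof (rule the_equality)
  show "\<exists>q. M = smul s (\<Sum>l\<le>d. smul (q l) (B l)) \<and> q k = a k / s"
    using assms by (intro exI[of _ "\<lambda>l. a l / s"]) (simp add: smul_sum_lincomb)
next
  fix c assume "\<exists>q. M = smul s (\<Sum>l\<le>d. smul (q l) (B l)) \<and> q k = c"
  then obtain q where q: "M = (\<Sum>l\<le>d. smul (s * q l) (B l))" "q k = c"
    by (auto simp: smul_sum_lincomb)
  have "s * q k = a k" using indep_eq[OF assms(1) _ assms(3), of "\<lambda>l. s * q l" a] q assms(2) by simp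
  then show "c = a k / s" using q assms(4) by (simp add: field_simps)
qed

lemma mmul_sum_left: "mmul (\<Sum>i\<in>S. f i) N = (\<Sum>i\<in>S. mmul (f i) N)"
  by (auto simp: fun_eq_iff mmul_def sum_distrib_right intro: sum.swap)
lemma mmul_sum_right: "mmul M (\<Sum>i\<in>S. f i) = (\<Sum>i\<in>S. mmul M (f i))"
  by (auto simp: fun_eq_iff mmul_def sum_distrib_left intro: sum.swap)
lemma mmul_smul_left: "mmul (smul c M) N = smul c (mmul M N)"
  by (auto simp: fun_eq_iff mmul_def sum_distrib_left mult.assoc)
lemma mmul_smul_right: "mmul M (smul c N) = smul c (mmul M N)"
  by (auto simp: fun_eq_iff mmul_def sum_distrib_left mult.left_commute)
lemma schur_sum_left: "schur (\<Sum>i\<in>S. f i) N = (\<Sum>i\<in>S. schur (f i) N)"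
  by (auto simp: fun_eq_iff sum_distrib_right)
lemma schur_sum_right: "schur M (\<Sum>i\<in>S. f i) = (\<Sum>i\<in>S. schur M (f i))"
  by (auto simp: fun_eq_iff sum_distrib_left)
lemma schur_smul_left: "schur (smul c M) N = smul c (schur M N)"
  by (auto simp: fun_eq_iff mult.assoc)
lemma schur_smul_right: "schur M (smul c N) = smul c (schur M N)"
  by (auto simp: fun_eq_iff mult.left_commute)

lemma BMs_span:
  assumes "inj_on A {..d}"
  shows "BMs d A = mvs.span (A ` {..d})"
proof -
  have "mvs.span (A ` {..d}) = range (\<lambda>u. \<Sum>v\<in>A ` {..d}. smul (u v) v)"
    by (rule mvs.span_finite) simp
  also have "\<dots> = range (\<lambda>u. \<Sum>i\<le>d. smul (u (A i)) (A i))"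
    using sum.reindex[OF assms, of "\<lambda>v. smul (_ v) v"] by (simp add: comp_def)
  also have "\<dots> = BMs d A"
  proof
    show "range (\<lambda>u. \<Sum>i\<le>d. smul (u (A i)) (A i)) \<subseteq> BMs d A" by (auto simp: BMs_def)
    show "BMs d A \<subseteq> range (\<lambda>u. \<Sum>i\<le>d. smul (u (A i)) (A i))"
    proof
      fix M assume "M \<in> BMs d A"
      then obtain c where c: "M = (\<Sum>i\<le>d. smul (c i) (A i))" by (auto simp: BMs_def)
      have "M = (\<Sum>i\<le>d. smul ((c \<circ> inv_into {..d} A) (A i)) (A i))"
        unfolding c using assms by (intro sum.cong) auto
      then show "M \<in> range (\<lambda>u. \<Sum>i\<le>d. smul (u (A i)) (A i))" by blast
    qed
  qed
  finally show ?thesis ..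
qed

definition Jm :: "'x mat" where "Jm = (\<lambda>x y. 1)"
definition cnjm :: "'x mat \<Rightarrow> 'x mat" where "cnjm M = (\<lambda>x y. cnj (M x y))"

definition scheme :: "nat \<Rightarrow> (nat \<Rightarrow> 'x::finite mat) \<Rightarrow> bool" where
 "scheme d A \<longleftrightarrow> (\<forall>i\<le>d. \<forall>x y. A i x y = 0 \<or> A i x y = 1) \<and>
   (\<forall>i\<le>d. \<forall>l\<le>d. i \<noteq> l \<longrightarrow> (\<forall>x y. A i x y = 0 \<or> A l x y = 0)) \<and>
   (\<forall>x y. \<exists>i\<le>d. A i x y = 1) \<and>
   (\<forall>i\<le>d. A i \<noteq> 0) \<and>
   (\<forall>i\<le>d. \<forall>x y. A i x y = A i y x) \<and>
   (\<exists>l\<le>d. A l = idm) \<and>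
   (\<forall>i\<le>d. \<forall>j\<le>d. mmul (A i) (A j) \<in> BMs d A)"

definition prim :: "nat \<Rightarrow> (nat \<Rightarrow> 'x::finite mat) \<Rightarrow> 'x mat \<Rightarrow> bool" where
  "prim d A F \<longleftrightarrow> F \<in> BMs d A \<and> mmul F F = F \<and> F \<noteq> 0 \<and>
     (\<forall>G\<in>BMs d A. mmul G G = G \<longrightarrow> mmul F G = F \<or> mmul F G = 0)"

definition nX :: "(nat \<Rightarrow> 'x mat) \<Rightarrow> nat" where "nX A = card (UNIV :: 'x set)"

locale ASch =
  fixes d :: nat and A E :: "nat \<Rightarrow> 'x::finite mat"
  assumes sch: "scheme d A" and Eord: "bij_betw E {..d} {F. prim d A F}"
begin

abbreviation "BM \<equiv> BMs d A"
abbreviation "nn \<equiv> nX A"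
lemma nn_eq: "nn = card (UNIV :: 'x set)" by (simp add: nX_def)

lemma nn_pos: "nn > 0" by (simp add: nX_def card_gt_0_iff)

lemma A01: "i \<le> d \<Longrightarrow> A i x y = 0 \<or> A i x y = 1" using sch unfolding scheme_def by blast
lemma Adisj: "i \<le> d \<Longrightarrow> l \<le> d \<Longrightarrow> i \<noteq> l \<Longrightarrow> A i x y = 0 \<or> A l x y = 0"
  using sch unfolding scheme_def by blast
lemma Acover: "\<exists>i\<le>d. A i x y = 1" using sch unfolding scheme_def by blast
lemma Anz: "i \<le> d \<Longrightarrow> A i \<noteq> 0" using sch unfolding scheme_def by blast
lemma Asym: "i \<le> d \<Longrightarrow> A i x y = A i y x" using sch unfolding scheme_def by blast
lemma Aclos: "i \<le> d \<Longrightarrow> j \<le> d \<Longrightarrow> mmul (A i) (A j) \<in> BM" using sch unfolding scheme_def by blast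

definition "iota = (SOME l. l \<le> d \<and> A l = idm)"
lemma iota: "iota \<le> d" "A iota = idm"
  using someI_ex[of "\<lambda>l. l \<le> d \<and> A l = idm"] sch unfolding scheme_def iota_def by blast+

lemma Anz_pt: assumes "i \<le> d" obtains x y where "A i x y = 1"
proof -
  from Anz[OF assms] obtain x y where "A i x y \<noteq> 0" by (auto simp: fun_eq_iff)
  then show ?thesis using A01[OF assms] that by blast
qed

lemma A_eval:
  assumes "i \<le> d" "A i x y = 1"
  shows "(\<Sum>l\<le>d. smul (c l) (A l)) x y = c i"
proof -
  have "(\<Sum>l\<le>d. smul (c l) (A l)) x y = (\<Sum>l\<le>d. c l * A l x y)" by simp
  also have "\<dots> = c i * A i x y + (\<Sum>l\<in>{..d}-{i}. c l * A l x y)"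
    using assms by (subst sum.remove[of _ i]) auto
  also have "(\<Sum>l\<in>{..d}-{i}. c l * A l x y) = 0"
    using Adisj[OF assms(1)] assms by (intro sum.neutral) (metis DiffE atMost_iff insertI1 mult_zero_right zero_neq_one)
  finally show ?thesis using assms by simp
qed

lemma A_indep: "indep d A"
  unfolding indep_def
proof (intro allI impI)
  fix c l assume h: "(\<Sum>l\<le>d. smul (c l) (A l)) = 0" and l: "l \<le> d"
  obtain x y where "A l x y = 1" using Anz_pt[OF l] by blast
  from A_eval[OF l this, of c] h show "c l = 0" by simp
qed

lemma A_inj: "inj_on A {..d}"
proof
  fix i l assume "i \<in> {..d}" "l \<in> {..d}" "A i = A l"
  then show "i = l" using Anz_pt[of i] Adisj[of i l] by (metis atMost_iff zero_neq_one)
qed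

lemma BM_span: "BM = mvs.span (A ` {..d})" by (rule BMs_span[OF A_inj])

lemma BM_A: "i \<le> d \<Longrightarrow> A i \<in> BM" unfolding BM_span by (rule mvs.span_base) auto
lemma BM_add: "M \<in> BM \<Longrightarrow> N \<in> BM \<Longrightarrow> M + N \<in> BM" unfolding BM_span by (rule mvs.span_add)
lemma BM_smul: "M \<in> BM \<Longrightarrow> smul c M \<in> BM" unfolding BM_span by (rule mvs.span_scale)
lemma BM_sum: "(\<And>i. i \<in> S \<Longrightarrow> f i \<in> BM) \<Longrightarrow> sum f S \<in> BM" unfolding BM_span by (rule mvs.span_sum)
lemma BM_zero: "0 \<in> BM" unfolding BM_span by (rule mvs.span_zero)
lemma BM_lincomb: "(\<Sum>l\<le>d. smul (c l) (A l)) \<in> BM" by (auto simp: BMs_def)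
lemma BM_obtain: assumes "M \<in> BM" obtains c where "M = (\<Sum>l\<le>d. smul (c l) (A l))"
  using assms by (auto simp: BMs_def)

lemma A_sum: "(\<Sum>i\<le>d. A i) = Jm"
proof (rule ext, rule ext)
  fix x y
  obtain i where i: "i \<le> d" "A i x y = 1" using Acover by blast
  have "(\<Sum>i\<le>d. A i) = (\<Sum>l\<le>d. smul 1 (A l))" by (simp add: smul_def)
  then show "(\<Sum>i\<le>d. A i) x y = Jm x y" using A_eval[OF i, of "\<lambda>_. 1"] by (simp add: Jm_def)
qed

lemma BM_J: "Jm \<in> BM" using BM_sum[of "{..d}" A] BM_A A_sum by auto
lemma BM_I: "idm \<in> BM" using BM_A iota by metis

lemma BM_mmul: assumes "M \<in> BM" "N \<in> BM" shows "mmul M N \<in> BM"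
proof -
  obtain a b where ab: "M = (\<Sum>l\<le>d. smul (a l) (A l))" "N = (\<Sum>l\<le>d. smul (b l) (A l))"
    using assms by (auto simp: BMs_def)
  show ?thesis unfolding ab mmul_sum_left mmul_sum_right mmul_smul_left mmul_smul_right
    by (intro BM_sum BM_smul Aclos) auto
qed

lemma schur_AA: "i \<le> d \<Longrightarrow> l \<le> d \<Longrightarrow> schur (A i) (A l) = (if i = l then A i else 0)"
  using A01 Adisj by (fastforce simp: fun_eq_iff)

lemma schur_lincomb:
  "schur (\<Sum>l\<le>d. smul (a l) (A l)) (\<Sum>l\<le>d. smul (b l) (A l)) = (\<Sum>l\<le>d. smul (a l * b l) (A l))"
proof (rule ext, rule ext)
  fix x y
  obtain i where i: "i \<le> d" "A i x y = 1" using Acover by blast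
  show "schur (\<Sum>l\<le>d. smul (a l) (A l)) (\<Sum>l\<le>d. smul (b l) (A l)) x y = (\<Sum>l\<le>d. smul (a l * b l) (A l)) x y"
    using A_eval[OF i, of a] A_eval[OF i, of b] A_eval[OF i, of "\<lambda>l. a l * b l"]
    by (simp only: schur_apply)
qed

lemma BM_schur: assumes "M \<in> BM" "N \<in> BM" shows "schur M N \<in> BM"
  using assms by (auto simp: BMs_def schur_lincomb)

lemma BM_sym: assumes "M \<in> BM" shows "M x y = M y x"
  using assms Asym by (auto simp: BMs_def intro!: sum.cong)

lemma BM_comm: assumes "M \<in> BM" "N \<in> BM" shows "mmul M N = mmul N M"
proof (rule ext, rule ext)
  fix x y
  have "mmul M N x y = mmul M N y x" using BM_sym[OF BM_mmul[OF assms]] .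
  also have "\<dots> = mmul N M x y" unfolding mmul_apply
    using BM_sym[OF assms(1)] BM_sym[OF assms(2)] by (simp add: mult.commute)
  finally show "mmul M N x y = mmul N M x y" .
qed

lemma BM_cnj: assumes "M \<in> BM" shows "cnjm M \<in> BM"
proof -
  obtain c where c: "M = (\<Sum>l\<le>d. smul (c l) (A l))" using assms BM_obtain by blast
  have "cnjm M = (\<Sum>l\<le>d. smul (cnj (c l)) (A l))"
  proof (rule ext, rule ext)
    fix x y
    have "\<And>l. l \<le> d \<Longrightarrow> cnj (A l x y) = A l x y" using A01 by (metis complex_cnj_one complex_cnj_zero)
    then show "cnjm M x y = (\<Sum>l\<le>d. smul (cnj (c l)) (A l)) x y"
      unfolding c cnjm_def by (auto simp: intro!: sum.cong)
  qed
  then show ?thesis by (simp add: BM_lincomb)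
qed

lemma mmul_cnjm: "mmul (cnjm M) (cnjm N) = cnjm (mmul M N)"
  by (auto simp: fun_eq_iff mmul_def cnjm_def)

lemma cnjm_cnjm[simp]: "cnjm (cnjm M) = M" by (simp add: cnjm_def)
lemma cnjm_zero_iff[simp]: "cnjm M = 0 \<longleftrightarrow> M = 0"
  by (auto simp: cnjm_def fun_eq_iff)

end

lemma mmul_assoc: "mmul (mmul L M) N = mmul L (mmul M N)"
  by (auto simp: fun_eq_iff mmul_def sum_distrib_left sum_distrib_right mult.assoc intro: sum.swap)

lemma smul_eq_0: "smul c M = 0 \<Longrightarrow> M \<noteq> 0 \<Longrightarrow> c = 0"
  by (auto simp: fun_eq_iff smul_def)

lemma sum_cnj_zero:
  fixes f :: "'a \<Rightarrow> complex"
  assumes "finite S" "(\<Sum>y\<in>S. f y * cnj (f y)) = 0" "y \<in> S" shows "f y = 0"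
proof -
  have "(\<Sum>y\<in>S. f y * cnj (f y)) = of_real (\<Sum>y\<in>S. (norm (f y))^2)"
    by (simp only: complex_norm_square[symmetric] of_real_sum)
  then have "(\<Sum>y\<in>S. (norm (f y))^2) = 0" by (metis assms(2) of_real_eq_0_iff)
  then have "(norm (f y))^2 = 0" using sum_nonneg_eq_0_iff[OF assms(1), of "\<lambda>y. (norm (f y))^2"] assms(3) by simp
  then show ?thesis by simp
qed

context ASch begin

lemma Eprim: "j \<le> d \<Longrightarrow> prim d A (E j)" using Eord by (auto dest: bij_betw_apply)
lemma E_BM: "j \<le> d \<Longrightarrow> E j \<in> BM" using Eprim prim_def by blast
lemma E_idem: "j \<le> d \<Longrightarrow> mmul (E j) (E j) = E j" using Eprim prim_def by blast
lemma E_nz: "j \<le> d \<Longrightarrow> E j \<noteq> 0" using Eprim prim_def by blast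
lemma E_inj: "inj_on E {..d}" using Eord bij_betw_imp_inj_on by blast
lemma prim_E: "prim d A F \<Longrightarrow> \<exists>j\<le>d. F = E j"
  using Eord by (auto simp: bij_betw_def)

lemma prim_eq_or_orth:
  assumes F: "prim d A F" and G: "prim d A G" shows "F = G \<or> mmul F G = 0"
proof -
  have 1: "mmul F G = F \<or> mmul F G = 0" using F G unfolding prim_def by blast
  have 2: "mmul G F = G \<or> mmul G F = 0" using F G unfolding prim_def by blast
  have "mmul F G = mmul G F" using F G unfolding prim_def by (intro BM_comm) auto
  then show ?thesis using 1 2 by auto
qed

lemma E_mul: "j \<le> d \<Longrightarrow> k \<le> d \<Longrightarrow> mmul (E j) (E k) = (if j = k then E j else 0)"
  using prim_eq_or_orth[OF Eprim Eprim] E_idem E_inj by (auto dest: inj_onD)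

lemma prim_cnj: assumes F: "prim d A F" shows "prim d A (cnjm F)"
  unfolding prim_def
proof (intro conjI ballI impI)
  show "cnjm F \<in> BM" using F BM_cnj prim_def by blast
  show "mmul (cnjm F) (cnjm F) = cnjm F" using F by (simp add: mmul_cnjm prim_def)
  show "cnjm F \<noteq> 0" using F by (simp add: prim_def)
  fix G assume G: "G \<in> BM" "mmul G G = G"
  have "cnjm G \<in> BM" "mmul (cnjm G) (cnjm G) = cnjm G" using G BM_cnj by (auto simp: mmul_cnjm)
  then have "mmul F (cnjm G) = F \<or> mmul F (cnjm G) = 0" using F unfolding prim_def by blast
  then have "cnjm (mmul F (cnjm G)) = cnjm F \<or> cnjm (mmul F (cnjm G)) = 0" by auto
  then show "mmul (cnjm F) G = cnjm F \<or> mmul (cnjm F) G = 0"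
    by (metis cnjm_cnjm mmul_cnjm)
qed

lemma E_real: assumes j: "j \<le> d" shows "cnj (E j x y) = E j x y"
proof -
  let ?F = "E j"
  have "?F = cnjm ?F"
  proof (rule ccontr)
    assume ne: "?F \<noteq> cnjm ?F"
    then have 0: "mmul ?F (cnjm ?F) = 0" using prim_eq_or_orth[OF Eprim[OF j] prim_cnj[OF Eprim[OF j]]] by blast
    have "?F = 0"
    proof (rule ext, rule ext)
      fix x y
      have "(\<Sum>z\<in>UNIV. ?F x z * cnj (?F x z)) = mmul ?F (cnjm ?F) x x"
        unfolding mmul_apply cnjm_def using BM_sym[OF E_BM[OF j]] by (metis (no_types))
      then have "(\<Sum>z\<in>UNIV. ?F x z * cnj (?F x z)) = 0" using 0 by simp
      then show "?F x y = 0 x y" using sum_cnj_zero[of UNIV "\<lambda>z. ?F x z" y] by simp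
    qed
    then show False using E_nz[OF j] by simp
  qed
  then show ?thesis by (metis cnjm_def)
qed

lemma E_sym: "j \<le> d \<Longrightarrow> E j x y = E j y x" using BM_sym E_BM by blast

lemma E_indep: "indep d E"
  unfolding indep_def
proof (intro allI impI)
  fix c k assume h: "(\<Sum>l\<le>d. smul (c l) (E l)) = 0" and k: "k \<le> d"
  have "mmul (E k) (\<Sum>l\<le>d. smul (c l) (E l)) = (\<Sum>l\<le>d. smul (c l) (if k = l then E k else 0))"
    unfolding mmul_sum_right mmul_smul_right using E_mul k by (intro sum.cong) auto
  also have "\<dots> = smul (c k) (E k)"
    using k by (simp add: if_distrib[of "smul _"] sum.delta' cong: if_cong)
  finally have "smul (c k) (E k) = 0" using h by (simp add: mmul_def fun_eq_iff)
  then show "c k = 0" using smul_eq_0 E_nz[OF k] by blast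
qed

lemma E_independent: "mvs.independent (E ` {..d})"
  unfolding mvs.independent_explicit_finite_subsets
proof (intro allI impI ballI)
  fix S u w assume S: "S \<subseteq> E ` {..d}" "finite S" and h: "(\<Sum>v\<in>S. smul (u v) v) = 0" and w: "w \<in> S"
  have orth: "v \<in> S \<Longrightarrow> mmul w v = (if w = v then w else 0)" for v
  proof -
    assume v: "v \<in> S"
    obtain j k where "j \<le> d" "k \<le> d" "w = E j" "v = E k" using S w v by blast
    then show ?thesis using E_mul E_inj by (auto dest: inj_onD)
  qed
  have "mmul w (\<Sum>v\<in>S. smul (u v) v) = (\<Sum>v\<in>S. smul (u v) (if w = v then w else 0))"
    unfolding mmul_sum_right mmul_smul_right using orth by (intro sum.cong) auto
  also have "\<dots> = smul (u w) w"
    using w S(2) by (simp add: if_distrib[of "smul _"] sum.delta cong: if_cong)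
  finally have "smul (u w) w = 0" using h by (simp add: mmul_def fun_eq_iff)
  moreover have "w \<noteq> 0" using S w E_nz by auto
  ultimately show "u w = 0" using smul_eq_0 by blast
qed

lemma E_span_BM: "BM \<subseteq> mvs.span (E ` {..d})"
proof
  fix M assume M: "M \<in> BM"
  show "M \<in> mvs.span (E ` {..d})"
  proof (rule ccontr)
    assume nM: "M \<notin> mvs.span (E ` {..d})"
    have ind: "mvs.independent (insert M (E ` {..d}))"
      using nM E_independent by (intro mvs.independent_insertI)
    have sub: "insert M (E ` {..d}) \<subseteq> mvs.span (A ` {..d})"
    proof -
      have "E ` {..d} \<subseteq> BM" using E_BM by auto
      then show ?thesis using M unfolding BM_span by auto
    qed
    have "card (insert M (E ` {..d})) \<le> card (A ` {..d})"
      using mvs.independent_span_bound[OF _ ind sub] by simp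
    also have "\<dots> \<le> Suc d" using card_image_le[of "{..d}" A] by simp
    finally have c1: "card (insert M (E ` {..d})) \<le> Suc d" .
    have "M \<notin> E ` {..d}"
    proof
      assume "M \<in> E ` {..d}"
      then have "M \<in> mvs.span (E ` {..d})" by (rule mvs.span_base)
      with nM show False by contradiction
    qed
    then have "card (insert M (E ` {..d})) = Suc (Suc d)"
      using card_image[OF E_inj] by simp
    then show False using c1 by simp
  qed
qed

lemma E_span: assumes "M \<in> BM" obtains a where "M = (\<Sum>l\<le>d. smul (a l) (E l))"
proof -
  have "M \<in> BMs d E" using E_span_BM assms unfolding BMs_span[OF E_inj] by blast
  then show ?thesis using that unfolding BMs_def by blast
qed

end

lemma swap_out:
  "(\<Sum>u\<in>U. \<Sum>v\<in>V. \<Sum>x\<in>X. g u v x) = (\<Sum>x\<in>X. \<Sum>u\<in>U. \<Sum>v\<in>V. g u v x)"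
proof -
  have "(\<Sum>u\<in>U. \<Sum>v\<in>V. \<Sum>x\<in>X. g u v x) = (\<Sum>u\<in>U. \<Sum>x\<in>X. \<Sum>v\<in>V. g u v x)"
    by (rule sum.cong[OF refl], rule sum.swap)
  also have "\<dots> = (\<Sum>x\<in>X. \<Sum>u\<in>U. \<Sum>v\<in>V. g u v x)" by (rule sum.swap)
  finally show ?thesis .
qed

lemma ups_ip_expand:
  fixes a b c a' b' c' :: "'x::finite mat"
  shows "(\<Sum>z\<in>UNIV. \<Sum>y\<in>UNIV. \<Sum>x\<in>UNIV. (\<Sum>u\<in>UNIV. a x u * b y u * c z u) * (\<Sum>v\<in>UNIV. a' x v * b' y v * c' z v))
   = (\<Sum>u\<in>UNIV. \<Sum>v\<in>UNIV. (\<Sum>x\<in>UNIV. a x u * a' x v) * (\<Sum>y\<in>UNIV. b y u * b' y v) * (\<Sum>z\<in>UNIV. c z u * c' z v))"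
proof -
  let ?F = "\<lambda>x y z u v. a x u * a' x v * (b y u * b' y v) * (c z u * c' z v)"
  have R: "(\<Sum>x\<in>UNIV. a x u * a' x v) * (\<Sum>y\<in>UNIV. b y u * b' y v) * (\<Sum>z\<in>UNIV. c z u * c' z v)
     = (\<Sum>z\<in>UNIV. \<Sum>y\<in>UNIV. \<Sum>x\<in>UNIV. ?F x y z u v)" for u v
    by (simp add: sum_distrib_left sum_distrib_right)
  have L: "(\<Sum>u\<in>UNIV. a x u * b y u * c z u) * (\<Sum>v\<in>UNIV. a' x v * b' y v * c' z v)
     = (\<Sum>u\<in>UNIV. \<Sum>v\<in>UNIV. ?F x y z u v)" for x y z
    by (simp add: sum_product mult_ac)
  have "(\<Sum>u\<in>UNIV. \<Sum>v\<in>UNIV. \<Sum>z\<in>UNIV. \<Sum>y\<in>UNIV. \<Sum>x\<in>UNIV. ?F x y z u v)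
      = (\<Sum>z\<in>UNIV. \<Sum>u\<in>UNIV. \<Sum>v\<in>UNIV. \<Sum>y\<in>UNIV. \<Sum>x\<in>UNIV. ?F x y z u v)" by (rule swap_out)
  also have "\<dots> = (\<Sum>z\<in>UNIV. \<Sum>y\<in>UNIV. \<Sum>u\<in>UNIV. \<Sum>v\<in>UNIV. \<Sum>x\<in>UNIV. ?F x y z u v)"
    by (rule sum.cong[OF refl], rule swap_out)
  also have "\<dots> = (\<Sum>z\<in>UNIV. \<Sum>y\<in>UNIV. \<Sum>x\<in>UNIV. \<Sum>u\<in>UNIV. \<Sum>v\<in>UNIV. ?F x y z u v)"
    by (rule sum.cong[OF refl], rule sum.cong[OF refl], rule swap_out)
  finally show ?thesis unfolding R L by simp
qed

definition tr :: "'x::finite mat \<Rightarrow> complex" where "tr M = (\<Sum>x\<in>UNIV. M x x)"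
definition ip :: "'x::finite tensor \<Rightarrow> 'x tensor \<Rightarrow> complex" where
  "ip T U = (\<Sum>z\<in>UNIV. \<Sum>y\<in>UNIV. \<Sum>x\<in>UNIV. T x y z * cnj (U x y z))"

lemma ip_self_real: "ip T T = of_real (\<Sum>z\<in>UNIV. \<Sum>y\<in>UNIV. \<Sum>x\<in>UNIV. (norm (T x y z))^2)"
  unfolding ip_def by (simp only: complex_norm_square[symmetric] of_real_sum)

lemma ip_self_zero:
  fixes T :: "'x::finite tensor"
  assumes "(\<Sum>z\<in>UNIV. \<Sum>y\<in>UNIV. \<Sum>x\<in>UNIV. (norm (T x y z))^2) = 0" shows "T = 0"
proof (rule ext, rule ext, rule ext)
  fix x y z
  have "(\<Sum>y\<in>UNIV. \<Sum>x\<in>UNIV. (norm (T x y z))^2) = 0"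
    using assms sum_nonneg_eq_0_iff[of UNIV "\<lambda>z. \<Sum>y\<in>UNIV. \<Sum>x\<in>UNIV. (norm (T x y z))^2"]
    by (simp add: sum_nonneg)
  then have "(\<Sum>x\<in>UNIV. (norm (T x y z))^2) = 0"
    using sum_nonneg_eq_0_iff[of UNIV "\<lambda>y. \<Sum>x\<in>UNIV. (norm (T x y z))^2"]
    by (simp add: sum_nonneg)
  then have "(norm (T x y z))^2 = 0"
    using sum_nonneg_eq_0_iff[of UNIV "\<lambda>x. (norm (T x y z))^2"] by simp
  then show "T x y z = 0 x y z" by simp
qed

lemma ip_sum_left: "ip (\<Sum>i\<in>S. f i) U = (\<Sum>i\<in>S. ip (f i) U)"
proof -
  let ?g = "\<lambda>i x y z. f i x y z * cnj (U x y z)"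
  have "ip (\<Sum>i\<in>S. f i) U = (\<Sum>z\<in>UNIV. \<Sum>y\<in>UNIV. \<Sum>x\<in>UNIV. \<Sum>i\<in>S. ?g i x y z)"
    unfolding ip_def by (simp add: sum_distrib_right)
  also have "\<dots> = (\<Sum>z\<in>UNIV. \<Sum>y\<in>UNIV. \<Sum>i\<in>S. \<Sum>x\<in>UNIV. ?g i x y z)"
    by (rule sum.cong[OF refl], rule sum.cong[OF refl], rule sum.swap)
  also have "\<dots> = (\<Sum>z\<in>UNIV. \<Sum>i\<in>S. \<Sum>y\<in>UNIV. \<Sum>x\<in>UNIV. ?g i x y z)"
    by (rule sum.cong[OF refl], rule sum.swap)
  also have "\<dots> = (\<Sum>i\<in>S. ip (f i) U)" unfolding ip_def by (rule sum.swap)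
  finally show ?thesis .
qed

lemma ip_tsmul_left: "ip (tsmul c T) U = c * ip T U"
  unfolding ip_def by (simp add: sum_distrib_left mult.assoc)

context ASch begin

lemma mmul_J_A: assumes i: "i \<le> d" shows "\<exists>c. mmul Jm (A i) = smul c Jm"
proof -
  obtain c where c: "mmul (A i) (A i) = (\<Sum>l\<le>d. smul (c l) (A l))" using Aclos[OF i i] BM_obtain by blast
  have "mmul Jm (A i) = smul (c iota) Jm"
  proof (rule ext, rule ext)
    fix x y
    have "mmul (A i) (A i) y y = c iota" using A_eval[OF iota(1), of y y c] iota(2) c by (simp add: idm_def)
    moreover have "mmul (A i) (A i) y y = (\<Sum>z\<in>UNIV. A i z y)" unfolding mmul_apply
    proof (rule sum.cong[OF refl])
      fix z show "A i y z * A i z y = A i z y" using Asym[OF i, of y z] A01[OF i, of z y] by auto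
    qed
    moreover have "mmul Jm (A i) x y = (\<Sum>z\<in>UNIV. A i z y)" by (simp add: mmul_apply Jm_def)
    ultimately show "mmul Jm (A i) x y = smul (c iota) Jm x y" by (simp add: Jm_def)
  qed
  then show ?thesis by blast
qed

lemma mmul_J_BM: assumes "M \<in> BM" shows "\<exists>c. mmul Jm M = smul c Jm"
proof -
  obtain a where a: "M = (\<Sum>l\<le>d. smul (a l) (A l))" using assms BM_obtain by blast
  obtain k where k: "\<forall>l\<le>d. mmul Jm (A l) = smul (k l) Jm" using mmul_J_A by metis
  have "mmul Jm M = (\<Sum>l\<le>d. smul (a l) (smul (k l) Jm))"
    unfolding a mmul_sum_right mmul_smul_right using k by (intro sum.cong) auto
  also have "\<dots> = smul (\<Sum>l\<le>d. a l * k l) Jm" by (auto simp: fun_eq_iff sum_distrib_right mult.assoc)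
  finally show ?thesis by blast
qed

lemma JJ: "mmul (Jm::'x mat) Jm = smul (of_nat nn) Jm"
  by (simp add: fun_eq_iff mmul_apply Jm_def nn_eq)

lemma Jm_nz: "(Jm :: 'x mat) \<noteq> 0" by (auto simp: Jm_def fun_eq_iff)

lemma prim_J: "prim d A (smul (1 / of_nat nn) (Jm::'x mat))"
  unfolding prim_def
proof (intro conjI ballI impI)
  show "smul (1 / of_nat nn) (Jm::'x mat) \<in> BM" by (intro BM_smul BM_J)
  show "mmul (smul (1 / of_nat nn) (Jm::'x mat)) (smul (1 / of_nat nn) (Jm::'x mat)) = smul (1 / of_nat nn) (Jm::'x mat)"
    unfolding mmul_smul_left mmul_smul_right JJ using nn_pos by (simp add: fun_eq_iff)
  show "smul (1 / of_nat nn) (Jm::'x mat) \<noteq> 0" using nn_pos by (simp add: Jm_def fun_eq_iff)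
  fix G assume G: "G \<in> BM" "mmul G G = G"
  obtain c where c: "mmul Jm G = smul c Jm" using mmul_J_BM[OF G(1)] by blast
  have "smul c Jm = mmul Jm (mmul G G)" using G c by simp
  also have "\<dots> = smul (c * c) Jm" by (simp add: mmul_assoc[symmetric] c mmul_smul_left fun_eq_iff)
  finally have "smul (c * c - c) Jm = 0" by (simp add: fun_eq_iff algebra_simps Jm_def)
  then have "c * c - c = 0" using smul_eq_0 Jm_nz by blast
  then have "c = 0 \<or> c = 1" by (metis (no_types) eq_iff_diff_eq_0 mult_cancel_right1 mult_eq_0_iff)
  then show "mmul (smul (1 / of_nat nn) (Jm::'x mat)) G = smul (1 / of_nat nn) (Jm::'x mat) \<or> mmul (smul (1 / of_nat nn) (Jm::'x mat)) G = 0"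
    by (auto simp: mmul_smul_left c fun_eq_iff)
qed

definition "tau = (SOME t. t \<le> d \<and> E t = smul (1 / of_nat nn) Jm)"
lemma tau: "tau \<le> d" "E tau = smul (1 / of_nat nn) Jm"
  using someI_ex[of "\<lambda>t. t \<le> d \<and> E t = smul (1 / of_nat nn) Jm"] prim_E[OF prim_J]
  unfolding tau_def by metis+

lemma colsum: assumes s: "s \<le> d" shows "(\<Sum>y\<in>UNIV. E s y u) = (if s = tau then 1 else 0)"
proof -
  fix x
  have "mmul (E tau) (E s) x u = (1 / of_nat nn) * (\<Sum>y\<in>UNIV. E s y u)"
    by (simp add: tau mmul_apply Jm_def sum_distrib_left)
  moreover have "mmul (E tau) (E s) x u = (if s = tau then 1 / of_nat nn else 0)"
    using E_mul[OF tau(1) s] by (auto simp: tau Jm_def)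
  ultimately show ?thesis using nn_pos by (auto split: if_splits)
qed

lemma E_cnj_sym: "j \<le> d \<Longrightarrow> E j y x = cnj (E j x y)" using E_real E_sym by metis

lemma tr_E: assumes j: "j \<le> d"
  shows "tr (E j) = of_real (\<Sum>x\<in>UNIV. \<Sum>y\<in>UNIV. (norm (E j x y))^2)"
    and "(\<Sum>x\<in>UNIV. \<Sum>y\<in>UNIV. (norm (E j x y))^2) > 0"
proof -
  have "tr (E j) = (\<Sum>x\<in>UNIV. mmul (E j) (E j) x x)" by (simp add: tr_def E_idem[OF j])
  also have "\<dots> = (\<Sum>x\<in>UNIV. \<Sum>y\<in>UNIV. E j x y * cnj (E j x y))"
    unfolding mmul_apply
    by (rule sum.cong[OF refl], rule sum.cong[OF refl], rule arg_cong[where f="\<lambda>t. _ * t"], rule E_cnj_sym[OF j])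
  finally show "tr (E j) = of_real (\<Sum>x\<in>UNIV. \<Sum>y\<in>UNIV. (norm (E j x y))^2)"
    by (simp only: complex_norm_square[symmetric] of_real_sum)
  obtain x0 y0 where nz: "E j x0 y0 \<noteq> 0" using E_nz[OF j] by (auto simp: fun_eq_iff)
  have "(\<Sum>y\<in>UNIV. (norm (E j x0 y))^2) > 0"
    by (rule sum_pos2[of UNIV y0]) (use nz in auto)
  then show "(\<Sum>x\<in>UNIV. \<Sum>y\<in>UNIV. (norm (E j x y))^2) > 0"
    by (intro sum_pos2[of UNIV x0 "\<lambda>x. \<Sum>y\<in>UNIV. (norm (E j x y))^2"]) (auto intro: sum_nonneg)
qed

abbreviation "Ups r s t \<equiv> Upsilon (E r) (E s) (E t)"

lemma Ups_real: assumes "r \<le> d" "s \<le> d" "t \<le> d"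
  shows "cnj (Ups r s t x y z) = Ups r s t x y z"
  using assms E_real by (simp add: Upsilon_apply)

definition "GG r s t = (\<Sum>u\<in>UNIV. \<Sum>v\<in>UNIV. E r u v * E s u v * E t u v)"

lemma E_col: "r \<le> d \<Longrightarrow> r' \<le> d \<Longrightarrow> (\<Sum>x\<in>UNIV. E r x u * E r' x v) = (if r = r' then E r u v else 0)"
proof -
  assume r: "r \<le> d" and r': "r' \<le> d"
  have "(\<Sum>x\<in>UNIV. E r x u * E r' x v) = mmul (E r) (E r') u v"
    unfolding mmul_apply by (rule sum.cong[OF refl]) (subst E_sym[OF r], rule refl)
  then show ?thesis using E_mul[OF r r'] by simp
qed

lemma ip_Ups:
  assumes "r \<le> d" "s \<le> d" "t \<le> d" "r' \<le> d" "s' \<le> d" "t' \<le> d"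
  shows "ip (Ups r s t) (Ups r' s' t') = (if r = r' \<and> s = s' \<and> t = t' then GG r s t else 0)"
proof -
  have "ip (Ups r s t) (Ups r' s' t') =
      (\<Sum>z\<in>UNIV. \<Sum>y\<in>UNIV. \<Sum>x\<in>UNIV. (\<Sum>u\<in>UNIV. E r x u * E s y u * E t z u) * (\<Sum>v\<in>UNIV. E r' x v * E s' y v * E t' z v))"
    unfolding ip_def using Ups_real[OF assms(4-6)] by (simp add: Upsilon_apply)
  also have "\<dots> = (\<Sum>u\<in>UNIV. \<Sum>v\<in>UNIV. (if r = r' then E r u v else 0) * (if s = s' then E s u v else 0) * (if t = t' then E t u v else 0))"
    unfolding ups_ip_expand using E_col assms by simp
  also have "\<dots> = (if r = r' \<and> s = s' \<and> t = t' then GG r s t else 0)"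
    by (cases "r = r'"; cases "s = s'"; cases "t = t'") (simp_all add: GG_def)
  finally show ?thesis .
qed

end

context ASch begin

lemma card_nn: "card (UNIV :: 'x set) = nn" by (simp add: nX_def)

lemma krein_val:
  assumes "t \<le> d" "schur (E r) (E s) = (\<Sum>l\<le>d. smul (e l) (E l))"
  shows "krein d E r s t = of_nat nn * e t"
proof -
  have "krein d E r s t = e t / (1 / of_nat (card (UNIV :: 'x set)))"
    unfolding krein_def by (rule the_coord_scaled[OF E_indep assms(2) assms(1)]) simp
  then show ?thesis by (simp add: card_nn)
qed

lemma GG_eq:
  assumes t: "t \<le> d" and e: "schur (E r) (E s) = (\<Sum>l\<le>d. smul (e l) (E l))"
  shows "GG r s t = e t * tr (E t)"
proof -
  have "GG r s t = (\<Sum>u\<in>UNIV. \<Sum>v\<in>UNIV. \<Sum>l\<le>d. e l * (E l u v * E t v u))"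
    unfolding GG_def
  proof (rule sum.cong[OF refl], rule sum.cong[OF refl])
    fix u v
    have "E r u v * E s u v = (\<Sum>l\<le>d. e l * E l u v)" using fun_cong[OF fun_cong[OF e, of u], of v] by simp
    then show "E r u v * E s u v * E t u v = (\<Sum>l\<le>d. e l * (E l u v * E t v u))"
      using E_sym[OF t, of u v] by (simp add: sum_distrib_right mult.assoc)
  qed
  also have "\<dots> = (\<Sum>l\<le>d. \<Sum>u\<in>UNIV. \<Sum>v\<in>UNIV. e l * (E l u v * E t v u))"
    by (rule swap_out)
  also have "\<dots> = (\<Sum>l\<le>d. e l * tr (mmul (E l) (E t)))"
    by (rule sum.cong[OF refl]) (simp add: tr_def mmul_apply sum_distrib_left)
  also have "\<dots> = (\<Sum>l\<le>d. if l = t then e t * tr (E t) else 0)"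
    using E_mul t by (intro sum.cong) (auto simp: tr_def)
  also have "\<dots> = e t * tr (E t)" using t by simp
  finally show ?thesis .
qed

definition "gg r s t = (\<Sum>z\<in>UNIV. \<Sum>y\<in>UNIV. \<Sum>x\<in>UNIV. (norm (Ups r s t x y z))^2)"

lemma gg_nonneg: "gg r s t \<ge> 0" unfolding gg_def by (intro sum_nonneg) auto

lemma GG_gg: "r \<le> d \<Longrightarrow> s \<le> d \<Longrightarrow> t \<le> d \<Longrightarrow> GG r s t = of_real (gg r s t)"
  using ip_Ups[of r s t r s t] ip_self_real[of "Ups r s t"] unfolding gg_def by simp

lemma gg_zero_iff: "gg r s t = 0 \<longleftrightarrow> Ups r s t = 0"
  using ip_self_zero[of "Ups r s t"] unfolding gg_def by auto

lemma supp_iff: "(r, s, t) \<in> krein_support d E \<longleftrightarrow> r \<le> d \<and> s \<le> d \<and> t \<le> d \<and> Ups r s t \<noteq> 0"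
proof (cases "r \<le> d \<and> s \<le> d \<and> t \<le> d")
  case False then show ?thesis by (auto simp: krein_support_def)
next
  case True
  then have r: "r \<le> d" and s: "s \<le> d" and t: "t \<le> d" by auto
  obtain e where e: "schur (E r) (E s) = (\<Sum>l\<le>d. smul (e l) (E l))"
    using E_span BM_schur E_BM r s by metis
  define tt where "tt = (\<Sum>x\<in>UNIV. \<Sum>y\<in>UNIV. (norm (E t x y))^2)"
  have tt: "tr (E t) = of_real tt" "tt > 0" using tr_E[OF t] unfolding tt_def by auto
  have "of_real (gg r s t) = e t * of_real tt" using GG_eq[OF t e] GG_gg[OF r s t] tt by simp
  then have "e t = of_real (gg r s t / tt)" using tt(2) by (simp add: field_simps)
  then have k: "krein d E r s t = of_real (of_nat nn * gg r s t / tt)"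
    using krein_val[OF t e] by simp
  have "cpos (krein d E r s t) \<longleftrightarrow> of_nat nn * gg r s t / tt > 0"
    unfolding k cpos_def by simp
  also have "\<dots> \<longleftrightarrow> gg r s t > 0" using tt(2) nn_pos by (simp add: divide_pos_pos zero_less_mult_iff zero_less_divide_iff)
  also have "\<dots> \<longleftrightarrow> Ups r s t \<noteq> 0" using gg_nonneg[of r s t] gg_zero_iff[of r s t] by linarith
  finally show ?thesis using True by (simp add: krein_support_def)
qed

lemma GG_nz: "(r, s, t) \<in> krein_support d E \<Longrightarrow> GG r s t \<noteq> 0"
  using supp_iff GG_gg gg_zero_iff by auto

lemma sum3_delta:
  assumes "r \<le> d" "s \<le> d" "t \<le> d"
  shows "(\<Sum>r'\<le>d. \<Sum>s'\<le>d. \<Sum>t'\<le>d. if r' = r \<and> s' = s \<and> t' = t then (X::complex) else 0) = X"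
proof -
  have "(\<Sum>r'\<le>d. \<Sum>s'\<le>d. \<Sum>t'\<le>d. if r' = r \<and> s' = s \<and> t' = t then X else 0)
      = (\<Sum>r'\<le>d. \<Sum>s'\<le>d. if r' = r \<and> s' = s then X else 0)"
  proof (intro sum.cong refl)
    fix r' s' show "(\<Sum>t'\<le>d. if r' = r \<and> s' = s \<and> t' = t then X else 0) = (if r' = r \<and> s' = s then X else 0)"
      by (cases "r' = r \<and> s' = s") (auto simp: assms)
  qed
  also have "\<dots> = (\<Sum>r'\<le>d. if r' = r then X else 0)"
  proof (intro sum.cong refl)
    fix r' show "(\<Sum>s'\<le>d. if r' = r \<and> s' = s then X else 0) = (if r' = r then X else 0)"
      by (cases "r' = r") (auto simp: assms)
  qed
  also have "\<dots> = X" using assms by simp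
  finally show ?thesis .
qed

abbreviation usum :: "(nat \<Rightarrow> nat \<Rightarrow> nat \<Rightarrow> complex) \<Rightarrow> 'x tensor" where
  "usum c \<equiv> (\<Sum>r\<le>d. \<Sum>s\<le>d. \<Sum>t\<le>d. tsmul (c r s t) (Ups r s t))"

lemma ip_usum:
  assumes "r \<le> d" "s \<le> d" "t \<le> d"
  shows "ip (usum c) (Ups r s t) = c r s t * GG r s t"
proof -
  have "ip (usum c) (Ups r s t) = (\<Sum>r'\<le>d. \<Sum>s'\<le>d. \<Sum>t'\<le>d. c r' s' t' * (if r' = r \<and> s' = s \<and> t' = t then GG r' s' t' else 0))"
    unfolding ip_sum_left ip_tsmul_left using ip_Ups assms by (intro sum.cong refl) auto
  also have "\<dots> = (\<Sum>r'\<le>d. \<Sum>s'\<le>d. \<Sum>t'\<le>d. if r' = r \<and> s' = s \<and> t' = t then c r s t * GG r s t else 0)"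
    by (intro sum.cong refl) auto
  also have "\<dots> = c r s t * GG r s t" by (rule sum3_delta[OF assms])
  finally show ?thesis .
qed

lemma usum_unique:
  assumes "usum c = usum c'" "(r, s, t) \<in> krein_support d E"
  shows "c r s t = c' r s t"
proof -
  have rst: "r \<le> d" "s \<le> d" "t \<le> d" using assms(2) supp_iff by auto
  have "c r s t * GG r s t = c' r s t * GG r s t" using ip_usum[OF rst, of c] ip_usum[OF rst, of c'] assms(1) by metis
  then show ?thesis using GG_nz[OF assms(2)] by simp
qed

lemma usum_cong:
  assumes "\<And>r s t. (r, s, t) \<in> krein_support d E \<Longrightarrow> c r s t = c' r s t"
  shows "usum c = usum c'"
proof (intro sum.cong refl)
  fix r s t assume "r \<in> {..d}" "s \<in> {..d}" "t \<in> {..d}"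
  then show "tsmul (c r s t) (Ups r s t) = tsmul (c' r s t) (Ups r s t)"
    using assms[of r s t] supp_iff[of r s t] by (cases "Ups r s t = 0") (auto simp: tsmul_def fun_eq_iff)
qed

lemma supp_sub: "krein_support d E \<subseteq> {..d} \<times> {..d} \<times> {..d}"
  by (auto simp: krein_support_def)

lemma supp_sum:
  "(\<Sum>(r', s', t')\<in>krein_support d E. tsmul (\<sigma> (r', s', t')) (Upsilon (E r') (E s') (E t')))
    = usum (\<lambda>r s t. \<sigma> (r, s, t))"
proof -
  have "(\<Sum>(r', s', t')\<in>krein_support d E. tsmul (\<sigma> (r', s', t')) (Upsilon (E r') (E s') (E t')))
     = (\<Sum>(r', s', t')\<in>{..d} \<times> {..d} \<times> {..d}. tsmul (\<sigma> (r', s', t')) (Upsilon (E r') (E s') (E t')))"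
    by (rule sum.mono_neutral_left) (auto simp: supp_iff tsmul_def fun_eq_iff)
  also have "\<dots> = usum (\<lambda>r s t. \<sigma> (r, s, t))"
    by (simp add: sum.cartesian_product)
  finally show ?thesis .
qed

lemma usum_add: "usum c + usum c' = usum (\<lambda>r s t. c r s t + c' r s t)"
  by (simp add: fun_eq_iff sum.distrib[symmetric] algebra_simps)

lemma usum_smul: "tsmul k (usum c) = usum (\<lambda>r s t. k * c r s t)"
  by (simp add: fun_eq_iff tsmul_def sum_distrib_left mult.assoc)

lemma usum_zero: "0 = usum (\<lambda>r s t. 0)"
  by (simp add: fun_eq_iff tsmul_def)

lemma Ups_lin:
  assumes "L \<in> BM" "M \<in> BM" "N \<in> BM"
  shows "\<exists>c. Upsilon L M N = usum c"
proof -
  obtain a where a: "L = (\<Sum>l\<le>d. smul (a l) (E l))" using E_span assms(1) by metis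
  obtain b where b: "M = (\<Sum>l\<le>d. smul (b l) (E l))" using E_span assms(2) by metis
  obtain c where c: "N = (\<Sum>l\<le>d. smul (c l) (E l))" using E_span assms(3) by metis
  have "Upsilon L M N = usum (\<lambda>r s t. a r * b s * c t)"
  proof (rule ext, rule ext, rule ext)
    fix x y z
    have "Upsilon L M N x y z = (\<Sum>u\<in>UNIV. \<Sum>s\<le>d. \<Sum>r\<le>d. \<Sum>t\<le>d. a r * b s * c t * (E r x u * E s y u * E t z u))"
      unfolding Upsilon_apply a b c
      by (simp add: sum_distrib_left sum_distrib_right mult_ac)
    also have "\<dots> = (\<Sum>u\<in>UNIV. \<Sum>r\<le>d. \<Sum>s\<le>d. \<Sum>t\<le>d. a r * b s * c t * (E r x u * E s y u * E t z u))"
      by (rule sum.cong[OF refl], rule sum.swap)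
    also have "\<dots> = (\<Sum>r\<le>d. \<Sum>u\<in>UNIV. \<Sum>s\<le>d. \<Sum>t\<le>d. a r * b s * c t * (E r x u * E s y u * E t z u))"
      by (rule sum.swap)
    also have "\<dots> = (\<Sum>r\<le>d. \<Sum>s\<le>d. \<Sum>u\<in>UNIV. \<Sum>t\<le>d. a r * b s * c t * (E r x u * E s y u * E t z u))"
      by (rule sum.cong[OF refl], rule sum.swap)
    also have "\<dots> = (\<Sum>r\<le>d. \<Sum>s\<le>d. \<Sum>t\<le>d. \<Sum>u\<in>UNIV. a r * b s * c t * (E r x u * E s y u * E t z u))"
      by (rule sum.cong[OF refl], rule sum.cong[OF refl], rule sum.swap)
    also have "\<dots> = usum (\<lambda>r s t. a r * b s * c t) x y z"
      by (simp add: Upsilon_apply sum_distrib_left)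
    finally show "Upsilon L M N x y z = usum (\<lambda>r s t. a r * b s * c t) x y z" .
  qed
  then show ?thesis by (intro exI[of _ "\<lambda>r s t. a r * b s * c t"])
qed

lemma tspan_usum:
  assumes "T \<in> tspan {Upsilon L M N | L M N. L \<in> BM \<and> M \<in> BM \<and> N \<in> BM}"
  shows "\<exists>c. T = usum c"
proof -
  obtain F cf where F: "finite F" "F \<subseteq> {Upsilon L M N | L M N. L \<in> BM \<and> M \<in> BM \<and> N \<in> BM}"
    and T: "T = (\<Sum>f\<in>F. tsmul (cf f) f)"
    using assms unfolding tspan_def by blast
  have "\<exists>c. (\<Sum>f\<in>F. tsmul (cf f) f) = usum c" using F
  proof (induction F rule: finite_induct)
    case empty show ?case by (simp only: sum.empty) (rule exI[of _ "\<lambda>r s t. 0"], rule usum_zero)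
  next
    case (insert f F)
    have "f \<in> {Upsilon L M N | L M N. L \<in> BM \<and> M \<in> BM \<and> N \<in> BM}" using insert.prems by simp
    then obtain L M N where LMN: "f = Upsilon L M N" "L \<in> BM" "M \<in> BM" "N \<in> BM" by blast
    from Ups_lin[OF LMN(2-4)] obtain c1 where c1': "Upsilon L M N = usum c1" ..
    then have c1: "f = usum c1" using LMN(1) by simp
    have "F \<subseteq> {Upsilon L M N | L M N. L \<in> BM \<and> M \<in> BM \<and> N \<in> BM}" using insert.prems by simp
    from insert.IH[OF this] obtain c2 where c2: "(\<Sum>f\<in>F. tsmul (cf f) f) = usum c2" ..
    have "(\<Sum>f\<in>insert f F. tsmul (cf f) f) = tsmul (cf f) (usum c1) + usum c2"
      using insert(1,2) c1 c2 by simp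
    also have "\<dots> = usum (\<lambda>r s t. cf f * c1 r s t + c2 r s t)" by (simp only: usum_smul usum_add)
    finally have eq: "(\<Sum>f\<in>insert f F. tsmul (cf f) f) = usum (\<lambda>r s t. cf f * c1 r s t + c2 r s t)" .
    show ?case by (rule exI[of _ "\<lambda>r s t. cf f * c1 r s t + c2 r s t"], rule eq)
  qed
  then show ?thesis using T by simp
qed

lemma dw_rep:
  assumes ijk: "i \<le> d" "j \<le> d" "k \<le> d"
    and sp: "Delta (A i) (A j) (A k) \<in> tspan {Upsilon L M N | L M N. L \<in> BM \<and> M \<in> BM \<and> N \<in> BM}"
  shows "Delta (A i) (A j) (A k) = usum (\<lambda>r s t. dw_param d A E i j k r s t)"
proof -
  obtain c where c: "Delta (A i) (A j) (A k) = usum c" using tspan_usum[OF sp] by blast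
  have ex: "Delta (A i) (A j) (A k) =
            (\<Sum>(r', s', t')\<in>krein_support d E. tsmul ((\<lambda>(r,s,t). c r s t) (r', s', t')) (Upsilon (E r') (E s') (E t')))"
    unfolding supp_sum c by simp
  have dw: "dw_param d A E i j k r s t = c r s t" if rst: "(r, s, t) \<in> krein_support d E" for r s t
  proof -
    have "(THE v. \<exists>\<sigma>. Delta (A i) (A j) (A k) =
            (\<Sum>(r', s', t')\<in>krein_support d E. tsmul (\<sigma> (r', s', t')) (Upsilon (E r') (E s') (E t')))
          \<and> \<sigma> (r, s, t) = v) = c r s t"
    proof (rule the_equality)
      show "\<exists>\<sigma>. Delta (A i) (A j) (A k) =
            (\<Sum>(r', s', t')\<in>krein_support d E. tsmul (\<sigma> (r', s', t')) (Upsilon (E r') (E s') (E t')))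
          \<and> \<sigma> (r, s, t) = c r s t"
        using ex by (intro exI[of _ "\<lambda>(r,s,t). c r s t"]) simp
    next
      fix v assume "\<exists>\<sigma>. Delta (A i) (A j) (A k) =
            (\<Sum>(r', s', t')\<in>krein_support d E. tsmul (\<sigma> (r', s', t')) (Upsilon (E r') (E s') (E t')))
          \<and> \<sigma> (r, s, t) = v"
      then obtain \<sigma> where s: "Delta (A i) (A j) (A k) = usum (\<lambda>r s t. \<sigma> (r, s, t))" "\<sigma> (r, s, t) = v"
        unfolding supp_sum by blast
      show "v = c r s t" using usum_unique[OF _ rst, of "\<lambda>r s t. \<sigma> (r, s, t)" c] s c by simp
    qed
    then show ?thesis using rst unfolding dw_param_def by simp
  qed
  show ?thesis unfolding c by (rule usum_cong) (simp add: dw)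
qed

end

context ASch begin

lemma usum_sum:
  assumes "finite S" shows "(\<Sum>i\<in>S. usum (c i)) = usum (\<lambda>r s t. \<Sum>i\<in>S. c i r s t)"
  using assms
proof (induction S rule: finite_induct)
  case empty show ?case by (simp only: sum.empty) (rule usum_zero)
next
  case (insert a S)
  have "(\<Sum>i\<in>insert a S. usum (c i)) = usum (c a) + usum (\<lambda>r s t. \<Sum>i\<in>S. c i r s t)"
    by (simp only: sum.insert[OF insert(1,2)] insert.IH)
  also have "\<dots> = usum (\<lambda>r s t. c a r s t + (\<Sum>i\<in>S. c i r s t))" by (rule usum_add)
  also have "\<dots> = usum (\<lambda>r s t. \<Sum>i\<in>insert a S. c i r s t)" by (simp only: sum.insert[OF insert(1,2)])
  finally show ?case .
qed

lemma A_sum_pt: "(\<Sum>i\<le>d. A i x y) = 1"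
  using fun_cong[OF fun_cong[OF A_sum, of x], of y] by (simp add: Jm_def)

lemma Ups_tau: "Ups tau tau tau x y z = 1 / (of_nat nn)^2"
proof -
  have "Ups tau tau tau x y z = (\<Sum>u\<in>(UNIV::'x set). (1 / of_nat nn)^3)"
    by (simp add: Upsilon_apply tau Jm_def power3_eq_cube)
  also have "\<dots> = of_nat nn * (1 / of_nat nn)^3" by (simp add: card_nn)
  also have "\<dots> = 1 / (of_nat nn)^2" using nn_pos by (simp add: power3_eq_cube power2_eq_square)
  finally show ?thesis .
qed

lemma tau_supp: "(tau, tau, tau) \<in> krein_support d E"
proof -
  have "Ups tau tau tau \<noteq> 0"
  proof
    assume "Ups tau tau tau = 0"
    then have "Ups tau tau tau undefined undefined undefined = 0" by simp
    then show False using Ups_tau nn_pos by simp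
  qed
  then show ?thesis using supp_iff tau(1) by simp
qed

lemma dw_out: "(r, s, t) \<notin> krein_support d E \<Longrightarrow> dw_param d A E i j k r s t = 0"
  unfolding dw_param_def by simp

definition "span_ok \<longleftrightarrow> (\<forall>i\<le>d. \<forall>j\<le>d. \<forall>k\<le>d.
   Delta (A i) (A j) (A k) \<in> tspan {Upsilon L M N | L M N. L \<in> BM \<and> M \<in> BM \<and> N \<in> BM})"

lemma M1:
  assumes ok: span_ok and rst: "r \<le> d" "s \<le> d" "t \<le> d"
  shows "(\<Sum>i\<le>d. \<Sum>j\<le>d. \<Sum>k\<le>d. dw_param d A E i j k r s t)
         = (if r = tau \<and> s = tau \<and> t = tau then (of_nat nn)^2 else 0)"
proof -
  let ?S = "\<lambda>r s t. \<Sum>i\<le>d. \<Sum>j\<le>d. \<Sum>k\<le>d. dw_param d A E i j k r s t"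
  let ?T = "\<lambda>r s t. if r = tau \<and> s = tau \<and> t = tau then (of_nat nn)^2 else (0::complex)"
  have "(\<Sum>i\<le>d. \<Sum>j\<le>d. \<Sum>k\<le>d. Delta (A i) (A j) (A k))
      = (\<Sum>i\<le>d. \<Sum>j\<le>d. \<Sum>k\<le>d. usum (\<lambda>r s t. dw_param d A E i j k r s t))"
    using ok dw_rep unfolding span_ok_def by (intro sum.cong refl) auto
  also have "\<dots> = usum ?S" by (simp only: usum_sum finite_atMost)
  finally have 1: "(\<Sum>i\<le>d. \<Sum>j\<le>d. \<Sum>k\<le>d. Delta (A i) (A j) (A k)) = usum ?S" .
  have 2: "(\<Sum>i\<le>d. \<Sum>j\<le>d. \<Sum>k\<le>d. Delta (A i) (A j) (A k)) = (\<lambda>x y z. 1)"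
  proof (rule ext, rule ext, rule ext)
    fix x y z
    show "(\<Sum>i\<le>d. \<Sum>j\<le>d. \<Sum>k\<le>d. Delta (A i) (A j) (A k)) x y z = 1"
      by (simp add: sum_distrib_left[symmetric] A_sum_pt)
  qed
  have 3: "usum ?T = (\<lambda>x y z. 1)"
  proof (rule ext, rule ext, rule ext)
    fix x y z
    have "usum ?T x y z = (\<Sum>r\<le>d. \<Sum>s\<le>d. \<Sum>t\<le>d. if r = tau \<and> s = tau \<and> t = tau then (of_nat nn)^2 * Ups tau tau tau x y z else 0)"
      unfolding sum_apply1 tsmul_apply by (intro sum.cong refl) auto
    also have "\<dots> = (of_nat nn)^2 * Ups tau tau tau x y z" by (rule sum3_delta[OF tau(1) tau(1) tau(1)])
    also have "\<dots> = 1" using nn_pos by (simp add: Ups_tau)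
    finally show "usum ?T x y z = 1" .
  qed
  have eq: "usum ?S = usum ?T" using 1 2 3 by simp
  show ?thesis
  proof (cases "(r, s, t) \<in> krein_support d E")
    case True then show ?thesis using usum_unique[OF eq True] by simp
  next
    case False
    then have "?S r s t = 0" using dw_out by simp
    moreover have "\<not> (r = tau \<and> s = tau \<and> t = tau)" using False tau_supp by auto
    ultimately show ?thesis by auto
  qed
qed

lemma cy_Ups:
  assumes rst: "r \<le> d" "s \<le> d" "t \<le> d"
  shows "(\<Sum>y\<in>UNIV. Ups r s t x y z) = (if s = tau \<and> t = r then E r x z else 0)"
proof -
  have "(\<Sum>y\<in>UNIV. Ups r s t x y z) = (\<Sum>y\<in>UNIV. \<Sum>u\<in>UNIV. E r x u * E t z u * E s y u)"
    by (simp add: Upsilon_apply mult_ac)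
  also have "\<dots> = (\<Sum>u\<in>UNIV. E r x u * E t z u * (\<Sum>y\<in>UNIV. E s y u))"
    by (subst sum.swap) (simp add: sum_distrib_left)
  also have "\<dots> = (if s = tau then (\<Sum>u\<in>UNIV. E r x u * E t u z) else 0)"
    using colsum[OF rst(2)] E_sym[OF rst(3)] by auto
  also have "\<dots> = (if s = tau then mmul (E r) (E t) x z else 0)" by (simp add: mmul_apply)
  also have "\<dots> = (if s = tau \<and> t = r then E r x z else 0)" using E_mul[OF rst(1) rst(3)] by auto
  finally show ?thesis .
qed

lemma cy_usum:
  "(\<lambda>x z. \<Sum>y\<in>UNIV. usum c x y z) = (\<Sum>r\<le>d. smul (c r tau r) (E r))"
proof (rule ext, rule ext)
  fix x z
  have "(\<Sum>y\<in>UNIV. usum c x y z) = (\<Sum>r\<le>d. \<Sum>s\<le>d. \<Sum>t\<le>d. c r s t * (\<Sum>y\<in>UNIV. Ups r s t x y z))"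
  proof -
    have "(\<Sum>y\<in>UNIV. usum c x y z) = (\<Sum>y\<in>UNIV. \<Sum>r\<le>d. \<Sum>s\<le>d. \<Sum>t\<le>d. c r s t * Ups r s t x y z)"
      by (simp only: sum_apply1 tsmul_apply)
    also have "\<dots> = (\<Sum>r\<le>d. \<Sum>y\<in>UNIV. \<Sum>s\<le>d. \<Sum>t\<le>d. c r s t * Ups r s t x y z)" by (rule sum.swap)
    also have "\<dots> = (\<Sum>r\<le>d. \<Sum>s\<le>d. \<Sum>y\<in>UNIV. \<Sum>t\<le>d. c r s t * Ups r s t x y z)"
      by (rule sum.cong[OF refl], rule sum.swap)
    also have "\<dots> = (\<Sum>r\<le>d. \<Sum>s\<le>d. \<Sum>t\<le>d. \<Sum>y\<in>UNIV. c r s t * Ups r s t x y z)"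
      by (rule sum.cong[OF refl], rule sum.cong[OF refl], rule sum.swap)
    finally show ?thesis by (simp only: sum_distrib_left)
  qed
  also have "\<dots> = (\<Sum>r\<le>d. \<Sum>s\<le>d. \<Sum>t\<le>d. if s = tau \<and> t = r then c r s t * E r x z else 0)"
    using cy_Ups by (intro sum.cong refl) auto
  also have "\<dots> = (\<Sum>r\<le>d. c r tau r * E r x z)"
  proof (rule sum.cong[OF refl])
    fix r assume r: "r \<in> {..d}"
    have "(\<Sum>s\<le>d. \<Sum>t\<le>d. if s = tau \<and> t = r then c r s t * E r x z else 0)
        = (\<Sum>s\<le>d. if s = tau then (\<Sum>t\<le>d. if t = r then c r s t * E r x z else 0) else 0)"
      by (intro sum.cong refl) auto
    also have "\<dots> = c r tau r * E r x z" using r tau(1) by simp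
    finally show "(\<Sum>s\<le>d. \<Sum>t\<le>d. if s = tau \<and> t = r then c r s t * E r x z else 0) = c r tau r * E r x z" .
  qed
  finally show "(\<Sum>y\<in>UNIV. usum c x y z) = (\<Sum>r\<le>d. smul (c r tau r) (E r)) x z" by simp
qed

lemma M2:
  assumes ok: span_ok and i: "i \<le> d"
  shows "smul (of_nat nn) (A i) = (\<Sum>r\<le>d. smul (\<Sum>j\<le>d. \<Sum>k\<le>d. dw_param d A E i j k r tau r) (E r))"
proof -
  let ?S = "\<lambda>r s t. \<Sum>j\<le>d. \<Sum>k\<le>d. dw_param d A E i j k r s t"
  have "(\<Sum>j\<le>d. \<Sum>k\<le>d. Delta (A i) (A j) (A k))
      = (\<Sum>j\<le>d. \<Sum>k\<le>d. usum (\<lambda>r s t. dw_param d A E i j k r s t))"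
    using ok dw_rep i unfolding span_ok_def by (intro sum.cong refl) auto
  also have "\<dots> = usum ?S" by (simp only: usum_sum finite_atMost)
  finally have 1: "(\<Sum>j\<le>d. \<Sum>k\<le>d. Delta (A i) (A j) (A k)) = usum ?S" .
  have 2: "(\<lambda>x z. \<Sum>y\<in>UNIV. (\<Sum>j\<le>d. \<Sum>k\<le>d. Delta (A i) (A j) (A k)) x y z) = smul (of_nat nn) (A i)"
  proof (rule ext, rule ext)
    fix x z
    have "\<And>y. (\<Sum>j\<le>d. \<Sum>k\<le>d. Delta (A i) (A j) (A k)) x y z = A i x z"
      by (simp add: sum_distrib_left[symmetric] A_sum_pt)
    then show "(\<Sum>y\<in>UNIV. (\<Sum>j\<le>d. \<Sum>k\<le>d. Delta (A i) (A j) (A k)) x y z) = smul (of_nat nn) (A i) x z"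
      by (simp add: A_sum_pt card_nn)
  qed
  show ?thesis using 2 cy_usum[of ?S] unfolding 1 by simp
qed

end

lemma lincomb_delta: assumes j: "j \<le> (d::nat)" shows "(\<Sum>r\<le>d. smul (if r = j then 1 else 0) (B r)) = (B j :: 'x mat)"
proof (rule ext, rule ext)
  fix x y
  have "(\<Sum>r\<le>d. smul (if r = j then 1 else 0) (B r)) x y = (\<Sum>r\<le>d. if r = j then B j x y else 0)"
    unfolding sum_apply1 smul_apply by (intro sum.cong refl) auto
  also have "\<dots> = B j x y" using j by simp
  finally show "(\<Sum>r\<le>d. smul (if r = j then 1 else 0) (B r)) x y = B j x y" .
qed

lemma adj_apply: "adj P x y = of_bool ((x, y) \<in> P)" by (simp add: adj_def)

lemma adj_mmul_card:
  "mmul (adj P) (adj Q) x y = of_nat (card {z::'x::finite. (x, z) \<in> P \<and> (z, y) \<in> Q})"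
proof -
  have "mmul (adj P) (adj Q) x y = (\<Sum>z\<in>UNIV. of_bool ((x, z) \<in> P \<and> (z, y) \<in> Q))"
    unfolding mmul_apply adj_apply by (intro sum.cong) auto
  then show ?thesis by simp
qed

context ASch begin

lemma inum_val:
  assumes ijk: "i \<le> d" "j \<le> d" "k \<le> d" and p: "mmul (A i) (A j) = (\<Sum>l\<le>d. smul (p l) (A l))"
  shows "of_nat (inum A i j k) = p k"
proof -
  define q where "q = (SOME q. q \<in> rel_of (A k))"
  obtain x0 y0 where "A k x0 y0 = 1" using Anz_pt[OF ijk(3)] by blast
  then have "(x0, y0) \<in> rel_of (A k)" by (simp add: rel_of_def)
  then have "q \<in> rel_of (A k)" unfolding q_def by (rule someI)
  then have "A k (fst q) (snd q) \<noteq> 0" by (cases q) (simp add: rel_of_def)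
  then have q1: "A k (fst q) (snd q) = 1" using A01[OF ijk(3), of "fst q" "snd q"] by simp
  have "of_nat (inum A i j k) = (of_nat (card {z. (fst q, z) \<in> rel_of (A i) \<and> (z, snd q) \<in> rel_of (A j)}) :: complex)"
    unfolding inum_def intersection_number_def q_def Let_def by simp
  also have "\<dots> = (\<Sum>z\<in>UNIV. of_bool ((fst q, z) \<in> rel_of (A i) \<and> (z, snd q) \<in> rel_of (A j)))"
    by simp
  also have "\<dots> = mmul (A i) (A j) (fst q) (snd q)"
    unfolding mmul_apply
  proof (rule sum.cong[OF refl])
    fix z
    show "of_bool ((fst q, z) \<in> rel_of (A i) \<and> (z, snd q) \<in> rel_of (A j)) = A i (fst q) z * A j z (snd q)"
      using A01[OF ijk(1), of "fst q" z] A01[OF ijk(2), of z "snd q"] by (auto simp: rel_of_def)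
  qed
  also have "\<dots> = p k" using p A_eval[OF ijk(3) q1] by simp
  finally show ?thesis .
qed

lemma E_mul_lincomb:
  assumes r: "r \<le> d" shows "mmul (E r) (\<Sum>s\<le>d. smul (b s) (E s)) = smul (b r) (E r)"
proof -
  have "mmul (E r) (\<Sum>s\<le>d. smul (b s) (E s)) = (\<Sum>s\<le>d. if r = s then smul (b r) (E r) else 0)"
    unfolding mmul_sum_right mmul_smul_right using E_mul r by (intro sum.cong) (auto simp: fun_eq_iff)
  also have "\<dots> = smul (b r) (E r)" using r by simp
  finally show ?thesis .
qed

lemma E_lincomb_mul:
  "mmul (\<Sum>r\<le>d. smul (a r) (E r)) (\<Sum>s\<le>d. smul (b s) (E s)) = (\<Sum>r\<le>d. smul (a r * b r) (E r))"
  unfolding mmul_sum_left mmul_smul_left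
  by (intro sum.cong refl) (auto simp: E_mul_lincomb fun_eq_iff mult.assoc)

end

lemma adj_inj:
  assumes S: "sym_assoc_scheme d R" shows "inj_on (\<lambda>i. adj (R i)) {..d}"
proof
  fix i l assume il: "i \<in> {..d}" "l \<in> {..d}" "adj (R i) = adj (R l)"
  show "i = l"
  proof (rule ccontr)
    assume "i \<noteq> l"
    then have disj: "R i \<inter> R l = {}" using S il unfolding sym_assoc_scheme_def by auto
    have "R i \<noteq> {}" using S il unfolding sym_assoc_scheme_def by auto
    then obtain x y where "(x, y) \<in> R i" by auto
    moreover have "adj (R i) x y = adj (R l) x y" using il by simp
    ultimately show False using disj by (auto simp: adj_def split: if_splits)
  qed
qed

lemma trans_scheme:
  fixes R :: "nat \<Rightarrow> ('x::finite \<times> 'x) set" and A :: "nat \<Rightarrow> 'x mat"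
  assumes S: "sym_assoc_scheme d R" and O: "adj_ordering d R A"
  shows "scheme d A" "bose_mesner d R = BMs d A"
proof -
  let ?B = "\<lambda>i. adj (R i)"
  have Binj: "inj_on ?B {..d}" by (rule adj_inj[OF S])
  have Ainj: "inj_on A {..d}" and img: "A ` {..d} = ?B ` {..d}"
    using O unfolding adj_ordering_def bij_betw_def by auto
  have BM_eq: "bose_mesner d R = BMs d A"
    unfolding bose_mesner_def BMs_def[symmetric] BMs_span[OF Binj] BMs_span[OF Ainj] img ..
  then show "bose_mesner d R = BMs d A" .
  have AB: "\<exists>l\<le>d. A i = adj (R l)" if "i \<le> d" for i using img that by (metis atMost_iff image_eqI imageE)
  have BA: "\<exists>i\<le>d. A i = adj (R l)" if "l \<le> d" for l using img that by (metis atMost_iff image_eqI imageE)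
  note S' = S[unfolded sym_assoc_scheme_def]
  have Sd1: "\<forall>i\<le>d. R i \<noteq> {}" using S' by (elim conjE) assumption
  have Sd2: "\<forall>i\<le>d. \<forall>j\<le>d. i \<noteq> j \<longrightarrow> R i \<inter> R j = {}" using S' by (elim conjE) assumption
  have Sd3: "(\<Union>i\<le>d. R i) = UNIV" using S' by (elim conjE) assumption
  have Sd4: "R 0 = Id" using S' by (elim conjE) assumption
  have Sd5: "\<forall>i\<le>d. sym (R i)" using S' by (elim conjE) assumption
  have Sd6: "\<forall>i\<le>d. \<forall>j\<le>d. \<forall>k\<le>d. \<forall>x y x' y'. (x, y) \<in> R k \<longrightarrow> (x', y') \<in> R k \<longrightarrow>
        card {z. (x, z) \<in> R i \<and> (z, y) \<in> R j} = card {z. (x', z) \<in> R i \<and> (z, y') \<in> R j}"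
    using S' by (elim conjE) assumption
  note Sd = Sd1 Sd2 Sd3 Sd4 Sd5 Sd6
  have Bclos: "mmul (?B a) (?B b) \<in> BMs d ?B" if ab: "a \<le> d" "b \<le> d" for a b
  proof -
    define pt where "pt c = (SOME p. p \<in> R c)" for c
    define p where "p c = (of_nat (card {z. (fst (pt c), z) \<in> R a \<and> (z, snd (pt c)) \<in> R b}) :: complex)" for c
    have pt: "pt c \<in> R c" if "c \<le> d" for c using Sd(1) that unfolding pt_def by (simp add: some_in_eq)
    have "mmul (?B a) (?B b) = (\<Sum>c\<le>d. smul (p c) (?B c))"
    proof (rule ext, rule ext)
      fix x y
      obtain c0 where c0: "c0 \<le> d" "(x, y) \<in> R c0" using Sd(3) by blast
      have other: "(x, y) \<notin> R c" if "c \<le> d" "c \<noteq> c0" for c using Sd(2) c0 that by blast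
      have "(\<Sum>c\<le>d. smul (p c) (?B c)) x y = (\<Sum>c\<le>d. if c = c0 then p c else 0)"
        unfolding sum_apply1 smul_apply using other c0 by (intro sum.cong refl) (auto simp: adj_def)
      also have "\<dots> = p c0" using c0 by simp
      also have "\<dots> = of_nat (card {z. (x, z) \<in> R a \<and> (z, y) \<in> R b})"
      proof -
        obtain x' y' where xy': "pt c0 = (x', y')" by (cases "pt c0")
        have "(x', y') \<in> R c0" using pt[OF c0(1)] xy' by simp
        then have "card {z. (x', z) \<in> R a \<and> (z, y') \<in> R b} = card {z. (x, z) \<in> R a \<and> (z, y) \<in> R b}"
          using Sd6 ab c0 by blast
        then show ?thesis unfolding p_def xy' by simp
      qed
      also have "\<dots> = mmul (?B a) (?B b) x y" by (simp add: adj_mmul_card)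
      finally show "mmul (?B a) (?B b) x y = (\<Sum>c\<le>d. smul (p c) (?B c)) x y" by simp
    qed
    then show ?thesis unfolding BMs_def by blast
  qed
  have BMB: "BMs d ?B = BMs d A" unfolding BMs_span[OF Binj] BMs_span[OF Ainj] img ..
  show "scheme d A" unfolding scheme_def
  proof (intro conjI allI impI)
    fix i x y assume i: "i \<le> d"
    then obtain a where "a \<le> d" "A i = ?B a" using AB by blast
    then show "A i x y = 0 \<or> A i x y = 1" by (simp add: adj_def)
  next
    fix i l x y assume il: "i \<le> d" "l \<le> d" "i \<noteq> l"
    obtain a b where ab: "a \<le> d" "b \<le> d" "A i = ?B a" "A l = ?B b" using AB il by metis
    have "a \<noteq> b" using Ainj il ab by (metis atMost_iff inj_onD)
    then have "R a \<inter> R b = {}" using Sd(2) ab by blast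
    then show "A i x y = 0 \<or> A l x y = 0" using ab by (auto simp: adj_def)
  next
    fix x y
    obtain l where l: "l \<le> d" "(x, y) \<in> R l" using Sd(3) by blast
    then obtain i where "i \<le> d" "A i = ?B l" using BA by blast
    then show "\<exists>i\<le>d. A i x y = 1" using l by (auto simp: adj_def)
  next
    fix i assume i: "i \<le> d"
    obtain a where a: "a \<le> d" "A i = ?B a" using AB i by blast
    have "R a \<noteq> {}" using Sd1 a by auto
    then obtain x y where "(x, y) \<in> R a" by auto
    then show "A i \<noteq> 0" using a by (auto simp: adj_def fun_eq_iff)
  next
    fix i x y assume i: "i \<le> d"
    obtain a where a: "a \<le> d" "A i = ?B a" using AB i by blast
    then show "A i x y = A i y x" using Sd(5) by (auto simp: adj_def sym_def)
  next
    obtain i where "i \<le> d" "A i = ?B 0" using BA by blast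
    moreover have "?B 0 = idm" using Sd(4) by (auto simp: adj_def idm_def fun_eq_iff)
    ultimately show "\<exists>l\<le>d. A l = idm" by auto
  next
    fix i j assume ij: "i \<le> d" "j \<le> d"
    obtain a b where ab: "a \<le> d" "b \<le> d" "A i = ?B a" "A j = ?B b" using AB ij by metis
    show "mmul (A i) (A j) \<in> BMs d A" using Bclos[OF ab(1,2)] ab BMB by simp
  qed
qed

theorem mainTheorem4:
  fixes d :: nat
    and R :: "nat \<Rightarrow> ('x::finite \<times> 'x) set"
    and S :: "nat \<Rightarrow> ('y::finite \<times> 'y) set"
    and A E :: "nat \<Rightarrow> 'x mat"
    and A' E' :: "nat \<Rightarrow> 'y mat"
  assumes "sym_assoc_scheme d R" and "sym_assoc_scheme d S"
    and "exactly_triply_regular d R" and "exactly_triply_regular d S"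
    and "adj_ordering d R A" and "adj_ordering d S A'"
    and "idem_ordering d R E" and "idem_ordering d S E'"
    and "\<forall>i\<le>d. \<forall>j\<le>d. \<forall>k\<le>d. \<forall>r\<le>d. \<forall>s\<le>d. \<forall>t\<le>d.
           dw_param d A E i j k r s t = dw_param d A' E' i j k r s t"
  shows "(\<forall>i\<le>d. \<forall>j\<le>d. \<forall>k\<le>d. inum A i j k = inum A' i j k)
       \<and> (\<forall>i\<le>d. \<forall>j\<le>d. eigP d A E j i = eigP d A' E' j i)
       \<and> (\<forall>i\<le>d. \<forall>j\<le>d. dualQ d A E j i = dualQ d A' E' j i)
       \<and> (\<forall>i\<le>d. \<forall>j\<le>d. \<forall>k\<le>d. krein d E i j k = krein d E' i j k)
       \<and> (\<forall>M\<in>bose_mesner d R. \<forall>N\<in>bose_mesner d R.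
            kappa d A A' (mmul M N) = mmul (kappa d A A' M) (kappa d A A' N)
          \<and> kappa d A A' (schur M N) = schur (kappa d A A' M) (kappa d A A' N))
       \<and> (\<forall>j\<le>d. kappa d A A' (E j) = E' j)"
proof -
  have schX: "scheme d A" and bmX: "bose_mesner d R = BMs d A" using trans_scheme[OF assms(1,5)] by auto
  have schY: "scheme d A'" and bmY: "bose_mesner d S = BMs d A'" using trans_scheme[OF assms(2,6)] by auto
  have pX: "prim_idem d R F = prim d A F" for F unfolding prim_idem_def prim_def bmX ..
  have pY: "prim_idem d S F = prim d A' F" for F unfolding prim_idem_def prim_def bmY ..
  have EX: "bij_betw E {..d} {F. prim d A F}" using assms(7) unfolding idem_ordering_def pX .
  have EY: "bij_betw E' {..d} {F. prim d A' F}" using assms(8) unfolding idem_ordering_def pY .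
  interpret X: ASch d A E by (rule ASch.intro[OF schX EX])
  interpret Y: ASch d A' E' by (rule ASch.intro[OF schY EY])
  have okX: "X.span_ok" unfolding X.span_ok_def
  proof (intro allI impI)
    fix i j k assume ijk: "i \<le> d" "j \<le> d" "k \<le> d"
    have mem: "Delta (A i) (A j) (A k) \<in> {Delta L M N | L M N. L \<in> bose_mesner d R \<and> M \<in> bose_mesner d R \<and> N \<in> bose_mesner d R}"
      unfolding bmX using ijk X.BM_A by blast
    have eq1: "Delta (A i) (A j) (A k) = (\<Sum>f\<in>{Delta (A i) (A j) (A k)}. tsmul 1 f)" by (simp add: tsmul_def Delta_def)
    have "Delta (A i) (A j) (A k) \<in> Delta_space d R" unfolding Delta_space_def tspan_def
      by (rule CollectI, rule exI[of _ "{Delta (A i) (A j) (A k)}"], rule exI[of _ "\<lambda>_. 1"]) (use mem eq1 in simp)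
    moreover have "Delta_space d R \<subseteq> Upsilon_space d R"
      using assms(3) unfolding exactly_triply_regular_def dually_triply_regular_def by simp
    ultimately have "Delta (A i) (A j) (A k) \<in> Upsilon_space d R" by (rule rev_subsetD)
    then show "Delta (A i) (A j) (A k) \<in> tspan {Upsilon L M N | L M N. L \<in> X.BM \<and> M \<in> X.BM \<and> N \<in> X.BM}"
      unfolding Upsilon_space_def bmX .
  qed
  have okY: "Y.span_ok" unfolding Y.span_ok_def
  proof (intro allI impI)
    fix i j k assume ijk: "i \<le> d" "j \<le> d" "k \<le> d"
    have mem: "Delta (A' i) (A' j) (A' k) \<in> {Delta L M N | L M N. L \<in> bose_mesner d S \<and> M \<in> bose_mesner d S \<and> N \<in> bose_mesner d S}"
      unfolding bmY using ijk Y.BM_A by blast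
    have eq1: "Delta (A' i) (A' j) (A' k) = (\<Sum>f\<in>{Delta (A' i) (A' j) (A' k)}. tsmul 1 f)" by (simp add: tsmul_def Delta_def)
    have "Delta (A' i) (A' j) (A' k) \<in> Delta_space d S" unfolding Delta_space_def tspan_def
      by (rule CollectI, rule exI[of _ "{Delta (A' i) (A' j) (A' k)}"], rule exI[of _ "\<lambda>_. 1"]) (use mem eq1 in simp)
    moreover have "Delta_space d S \<subseteq> Upsilon_space d S"
      using assms(4) unfolding exactly_triply_regular_def dually_triply_regular_def by simp
    ultimately have "Delta (A' i) (A' j) (A' k) \<in> Upsilon_space d S" by (rule rev_subsetD)
    then show "Delta (A' i) (A' j) (A' k) \<in> tspan {Upsilon L M N | L M N. L \<in> Y.BM \<and> M \<in> Y.BM \<and> N \<in> Y.BM}"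
      unfolding Upsilon_space_def bmY .
  qed
  have H: "dw_param d A E i j k r s t = dw_param d A' E' i j k r s t"
    if "i \<le> d" "j \<le> d" "k \<le> d" "r \<le> d" "s \<le> d" "t \<le> d" for i j k r s t
    using assms(9) that by blast
  have sumeq: "(\<Sum>i\<le>d. \<Sum>j\<le>d. \<Sum>k\<le>d. dw_param d A E i j k r s t) = (\<Sum>i\<le>d. \<Sum>j\<le>d. \<Sum>k\<le>d. dw_param d A' E' i j k r s t)"
    if "r \<le> d" "s \<le> d" "t \<le> d" for r s t
    using H that by (intro sum.cong refl) auto
  have "(of_nat X.nn :: complex)^2 = (if X.tau = Y.tau then (of_nat Y.nn)^2 else 0)"
    using X.M1[OF okX X.tau(1) X.tau(1) X.tau(1)] Y.M1[OF okY X.tau(1) X.tau(1) X.tau(1)]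
      sumeq[OF X.tau(1) X.tau(1) X.tau(1)] by simp
  then have tt: "X.tau = Y.tau" and "(of_nat X.nn :: complex)^2 = (of_nat Y.nn)^2"
    using X.nn_pos by (auto split: if_splits)
  then have "X.nn ^ 2 = Y.nn ^ 2" by (metis of_nat_eq_iff of_nat_power)
  then have nneq: "X.nn = Y.nn" by (rule power_eq_imp_eq_base) auto
  define c where "c i r = 1 / of_nat X.nn * (\<Sum>j\<le>d. \<Sum>k\<le>d. dw_param d A E i j k r X.tau r)" for i r
  have AX: "A i = (\<Sum>r\<le>d. smul (c i r) (E r))" if i: "i \<le> d" for i
  proof -
    have "A i = smul (1 / of_nat X.nn) (smul (of_nat X.nn) (A i))" using X.nn_pos by (simp add: fun_eq_iff)
    also have "\<dots> = (\<Sum>r\<le>d. smul (c i r) (E r))" unfolding X.M2[OF okX i] smul_sum_lincomb c_def ..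
    finally show ?thesis .
  qed
  have AY: "A' i = (\<Sum>r\<le>d. smul (c i r) (E' r))" if i: "i \<le> d" for i
  proof -
    have cc: "c i r = 1 / of_nat Y.nn * (\<Sum>j\<le>d. \<Sum>k\<le>d. dw_param d A' E' i j k r Y.tau r)" if "r \<le> d" for r
      unfolding c_def nneq tt[symmetric] using H i that X.tau(1) by (intro arg_cong[where f="\<lambda>x. _ * x"] sum.cong refl) auto
    have "A' i = smul (1 / of_nat Y.nn) (smul (of_nat Y.nn) (A' i))" using Y.nn_pos by (simp add: fun_eq_iff)
    also have "\<dots> = (\<Sum>r\<le>d. smul (1 / of_nat Y.nn * (\<Sum>j\<le>d. \<Sum>k\<le>d. dw_param d A' E' i j k r Y.tau r)) (E' r))"
      unfolding Y.M2[OF okY i] smul_sum_lincomb ..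
    also have "\<dots> = (\<Sum>r\<le>d. smul (c i r) (E' r))" using cc by (intro sum.cong refl) auto
    finally show ?thesis .
  qed
  define b where "b j = (SOME b. E j = (\<Sum>i\<le>d. smul (b i) (A i)))" for j
  have bX: "E j = (\<Sum>i\<le>d. smul (b j i) (A i))" if j: "j \<le> d" for j
  proof -
    have "\<exists>b. E j = (\<Sum>i\<le>d. smul (b i) (A i))" using X.E_BM[OF j] unfolding BMs_def by blast
    then show ?thesis unfolding b_def by (rule someI_ex)
  qed
  have bc: "(\<Sum>i\<le>d. b j i * c i r) = (if r = j then 1 else 0)" if j: "j \<le> d" and r: "r \<le> d" for j r
  proof -
    have "(\<Sum>r\<le>d. smul (\<Sum>i\<le>d. b j i * c i r) (E r)) = (\<Sum>i\<le>d. smul (b j i) (\<Sum>r\<le>d. smul (c i r) (E r)))"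
      by (rule lincomb_comp[symmetric])
    also have "\<dots> = (\<Sum>i\<le>d. smul (b j i) (A i))" using AX by (intro sum.cong refl) auto
    also have "\<dots> = E j" using bX[OF j] by simp
    also have "\<dots> = (\<Sum>r\<le>d. smul (if r = j then 1 else 0) (E r))" by (rule lincomb_delta[OF j, symmetric])
    finally have "(\<Sum>r\<le>d. smul (\<Sum>i\<le>d. b j i * c i r) (E r)) = (\<Sum>r\<le>d. smul (if r = j then 1 else 0) (E r))" .
    from indep_eq[OF X.E_indep this r] show ?thesis by simp
  qed
  have kA: "kappa d A A' (\<Sum>i\<le>d. smul (a i) (A i)) = (\<Sum>i\<le>d. smul (a i) (A' i))" for a
    unfolding kappa_def by (intro sum.cong refl) (simp add: coord_eq[OF X.A_indep refl])
  have kEj: "(\<Sum>i\<le>d. smul (b r i) (A' i)) = E' r" if r: "r \<le> d" for r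
  proof -
    have "(\<Sum>i\<le>d. smul (b r i) (A' i)) = (\<Sum>i\<le>d. smul (b r i) (\<Sum>s\<le>d. smul (c i s) (E' s)))"
      using AY by (intro sum.cong refl) auto
    also have "\<dots> = (\<Sum>s\<le>d. smul (\<Sum>i\<le>d. b r i * c i s) (E' s))" by (rule lincomb_comp)
    also have "\<dots> = (\<Sum>s\<le>d. smul (if s = r then 1 else 0) (E' s))" using bc r by (intro sum.cong refl) auto
    also have "\<dots> = E' r" by (rule lincomb_delta[OF r])
    finally show ?thesis .
  qed
  have kE: "kappa d A A' (\<Sum>r\<le>d. smul (a r) (E r)) = (\<Sum>r\<le>d. smul (a r) (E' r))" for a
  proof -
    have "(\<Sum>r\<le>d. smul (a r) (E r)) = (\<Sum>r\<le>d. smul (a r) (\<Sum>i\<le>d. smul (b r i) (A i)))"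
      using bX by (intro sum.cong refl) auto
    also have "\<dots> = (\<Sum>i\<le>d. smul (\<Sum>r\<le>d. a r * b r i) (A i))" by (rule lincomb_comp)
    finally have "kappa d A A' (\<Sum>r\<le>d. smul (a r) (E r)) = (\<Sum>i\<le>d. smul (\<Sum>r\<le>d. a r * b r i) (A' i))"
      using kA by simp
    also have "\<dots> = (\<Sum>r\<le>d. smul (a r) (\<Sum>i\<le>d. smul (b r i) (A' i)))" by (rule lincomb_comp[symmetric])
    also have "\<dots> = (\<Sum>r\<le>d. smul (a r) (E' r))" using kEj by (intro sum.cong refl) auto
    finally show ?thesis .
  qed
  have kEE: "kappa d A A' (E j) = E' j" if j: "j \<le> d" for j
    using kE[of "\<lambda>r. if r = j then 1 else 0"] lincomb_delta[OF j, of E] lincomb_delta[OF j, of E'] by simp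
  have kAA: "kappa d A A' (A j) = A' j" if j: "j \<le> d" for j
    using kA[of "\<lambda>r. if r = j then 1 else 0"] lincomb_delta[OF j, of A] lincomb_delta[OF j, of A'] by simp
  have mult: "kappa d A A' (mmul M N) = mmul (kappa d A A' M) (kappa d A A' N)
          \<and> kappa d A A' (schur M N) = schur (kappa d A A' M) (kappa d A A' N)"
    if MN: "M \<in> bose_mesner d R" "N \<in> bose_mesner d R" for M N
  proof
    obtain a1 where a1: "M = (\<Sum>r\<le>d. smul (a1 r) (E r))" using X.E_span MN(1) bmX by metis
    obtain a2 where a2: "N = (\<Sum>r\<le>d. smul (a2 r) (E r))" using X.E_span MN(2) bmX by metis
    show "kappa d A A' (mmul M N) = mmul (kappa d A A' M) (kappa d A A' N)"
      unfolding a1 a2 X.E_lincomb_mul kE Y.E_lincomb_mul ..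
    obtain a3 where a3: "M = (\<Sum>r\<le>d. smul (a3 r) (A r))" using X.BM_obtain MN(1) bmX by metis
    obtain a4 where a4: "N = (\<Sum>r\<le>d. smul (a4 r) (A r))" using X.BM_obtain MN(2) bmX by metis
    show "kappa d A A' (schur M N) = schur (kappa d A A' M) (kappa d A A' N)"
      unfolding a3 a4 X.schur_lincomb kA Y.schur_lincomb ..
  qed
  have card_eq: "card (UNIV :: 'x set) = card (UNIV :: 'y set)" using nneq X.card_nn Y.card_nn by simp
  have eig: "eigP d A E j i = eigP d A' E' j i" if "i \<le> d" "j \<le> d" for i j
    unfolding eigP_def the_coord[OF X.E_indep AX[OF that(1)] that(2)] the_coord[OF Y.E_indep AY[OF that(1)] that(2)] ..
  have dq: "dualQ d A E j i = dualQ d A' E' j i" if "i \<le> d" "j \<le> d" for i j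
  proof -
    have "dualQ d A E j i = b i j / (1 / of_nat (card (UNIV :: 'x set)))"
      unfolding dualQ_def by (rule the_coord_scaled[OF X.A_indep bX[OF that(1)] that(2)]) simp
    moreover have "dualQ d A' E' j i = b i j / (1 / of_nat (card (UNIV :: 'y set)))"
      unfolding dualQ_def by (rule the_coord_scaled[OF Y.A_indep kEj[OF that(1), symmetric] that(2)]) simp
    ultimately show ?thesis using card_eq by simp
  qed
  have kr: "krein d E i j k = krein d E' i j k" if ijk: "i \<le> d" "j \<le> d" "k \<le> d" for i j k
  proof -
    obtain e where e: "schur (E i) (E j) = (\<Sum>l\<le>d. smul (e l) (E l))"
      using X.E_span X.BM_schur X.E_BM ijk by metis
    have "schur (E' i) (E' j) = kappa d A A' (schur (E i) (E j))"
      using mult[of "E i" "E j"] X.E_BM ijk kEE bmX by simp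
    also have "\<dots> = (\<Sum>l\<le>d. smul (e l) (E' l))" unfolding e kE ..
    finally have e': "schur (E' i) (E' j) = (\<Sum>l\<le>d. smul (e l) (E' l))" .
    show ?thesis using X.krein_val[OF ijk(3) e] Y.krein_val[OF ijk(3) e'] nneq by simp
  qed
  have inm: "inum A i j k = inum A' i j k" if ijk: "i \<le> d" "j \<le> d" "k \<le> d" for i j k
  proof -
    obtain p where p: "mmul (A i) (A j) = (\<Sum>l\<le>d. smul (p l) (A l))"
      using X.Aclos[OF ijk(1,2)] X.BM_obtain by metis
    have "mmul (A' i) (A' j) = kappa d A A' (mmul (A i) (A j))"
      using mult[of "A i" "A j"] X.BM_A ijk kAA bmX by simp
    also have "\<dots> = (\<Sum>l\<le>d. smul (p l) (A' l))" unfolding p kA ..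
    finally have p': "mmul (A' i) (A' j) = (\<Sum>l\<le>d. smul (p l) (A' l))" .
    have "(of_nat (inum A i j k) :: complex) = of_nat (inum A' i j k)"
      using X.inum_val[OF ijk p] Y.inum_val[OF ijk p'] by simp
    then show ?thesis by simp
  qed
  show ?thesis
  proof (intro conjI allI impI ballI)
    show "inum A i j k = inum A' i j k" if "i \<le> d" "j \<le> d" "k \<le> d" for i j k using inm that .
    show "eigP d A E j i = eigP d A' E' j i" if "i \<le> d" "j \<le> d" for i j using eig that .
    show "dualQ d A E j i = dualQ d A' E' j i" if "i \<le> d" "j \<le> d" for i j using dq that .
    show "krein d E i j k = krein d E' i j k" if "i \<le> d" "j \<le> d" "k \<le> d" for i j k using kr that .
    show "kappa d A A' (mmul M N) = mmul (kappa d A A' M) (kappa d A A' N)"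
      if "M \<in> bose_mesner d R" "N \<in> bose_mesner d R" for M N using mult[OF that] by (rule conjunct1)
    show "kappa d A A' (schur M N) = schur (kappa d A A' M) (kappa d A A' N)"
      if "M \<in> bose_mesner d R" "N \<in> bose_mesner d R" for M N using mult[OF that] by (rule conjunct2)
    show "kappa d A A' (E j) = E' j" if "j \<le> d" for j using kEE that .
  qed
qed

end
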